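(* Let $\Psi$ satisfy the standing assumption on $\Psi$ below, let $\{H_k\}_{k=1}^\infty=\{(h_{s,k},h_{f,k})\}$ be two-timescale admissible with $\sum_{k=1}^\infty h_{f,k}^{1+\varrho}<\infty$ for some $\varrho\in[1,\infty)$, let $\mathbf X$ be a solution of the stochastic simulator (S) below, and let $\hat\Omega\subset\Omega$ be such that for almost every $\omega\in\hat\Omega$ the hybrid sequence $\mathbf X(\omega)$ is bounded and complete. Then for almost every $\omega\in\hat\Omega$ the pair $(\mathbf X(\omega),\{H_k\}_{k=1}^\infty)$ is a two-timescale asymptotic simulation of $\mathcal H^1_{\mathrm{2HB}}$.
   Context: Standing assumption on $\Psi$: $\Psi:\mathbb R^n\to\mathbb R$ is continuously differentiable, has compact sublevel sets and globally Lipschitz gradient, and, with $\Psi^*:=\min\Psi$, satisfies $\mathcal Q^*:=\{q:\Psi(q)=\Psi^*\}=\{q:\nabla\Psi(q)=0\}$; moreover $\Psi=\frac1N\sum_{i=1}^N\Psi_i$ with $N\in\mathbb Z_{\ge1}$ and each $\Psi_i:\mathbb R^n\to\mathbb R$ continuously differentiable. Hybrid heavy ball data. Fix $\kappa,T>0$. State $\chi=(q,p,\tau)\in\mathbb R^{2n+1}$, $\xi\in\mathbb R^n$. $F_{\mathrm{HB}}(\chi,\xi):=(p,\,-\kappa p-\xi,\,\min\{1,2-\tau/T\})$; $G_{\mathrm{HB}}(\chi):=(q,0,0)$. $C:=\{(\chi,\xi):\langle\xi,p\rangle\le0,\tau\ge T\}\cup\{(\chi,\xi):\tau\le T\}$,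 $D:=\{(\chi,\xi):\langle\xi,p\rangle\ge0,\tau\ge T\}$. The hybrid inclusion $\mathcal H^1_{\mathrm{2HB}}$ on $\mathbb R^{3n+1}$ with slow state $x_s=\chi$ and fast state $x_f=\xi$ is: on $C$, $\dot\chi=F_{\mathrm{HB}}(\chi,\xi)$, $\dot\xi=-\xi+\nabla\Psi(q)$; on $D$, $(\chi^+,\xi^+)=(G_{\mathrm{HB}}(\chi),\xi)$. Stochastic simulator (S). Let $(\Omega,\mathcal F,\mathbb P)$ be a probability space and $\{\mathbf y_k\}_{k\ge1}$ i.i.d. random variables uniform on $\{1,\dots,N\}$; $\{\mathcal F_k\}$ is the minimal filtration generated by them, $\mathcal F_0=\{\emptyset,\Omega\}$. A collection $\omega\mapsto\mathbf X(\omega)=(\mathbf x_s(\omega),\mathbf x_f(\omega))$, with $\mathbf x_s=(\mathbf q,\mathbf p,\boldsymbol\tau)$, is a solution of (S) if for every $\omega$, $\mathbf X(\omega)$ is a complete hybrid sequence in $\mathbb R^{3n+1}$ such that: whenever $(k,j),(k+1,j)\in\mathrm{dom}\,\mathbf X(\omega)$, $\mathbf X(k,j)\in C$, $\mathbf x_s(k+1,j)=\mathbf x_s(k,j)+h_{s,k+1}F_{\mathrm{HB}}(\mathbf x_s(k,j),\mathbf x_f(k,j))$ and $\mathbf x_f(k+1,j)=\mathbf x_f(k,j)+h_{f,k+1}(\nabla\Psi_{\mathbf y_{k+1}}(\mathbf q(k,j))-\mathbf x_f(k,j))$; whenever $(k,j),(k,j+1)\in\mathrm{dom}\,\mathbf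 X(\omega)$, $\mathbf X(k,j)\in D$, $\mathbf x_s(k,j+1)=G_{\mathrm{HB}}(\mathbf x_s(k,j))$, $\mathbf x_f(k,j+1)=\mathbf x_f(k,j)$; and $\mathbf X$ is adapted: for each $k$, $\omega\mapsto\mathrm{gph}(\mathbf X(\omega))\cap(\{k\}\times\mathbb R\times\mathbb R^{3n+1})$ is $\mathcal F_k$-measurable. Hybrid sequences and two-timescale asymptotic simulations. A compact hybrid sequence domain is $\bigcup_{j=0}^{J-1}(\{k_j,\dots,k_{j+1}\}\times\{j\})$ with integers $0=k_0\le\dots\le k_J$; a hybrid sequence domain is a union of a nondecreasing sequence of such sets; a hybrid sequence is a map on one; complete = unbounded domain; complete in the $k$- (resp. $j$-) direction = set of $k$'s (resp. $j$'s) in the domain unbounded. $\bar\jmath_k:=\inf\{j:(k+1,j)\in\mathrm{dom}\}$, $\bar k_j:=\inf\{k:(k,j+1)\in\mathrm{dom}\}$. $\limsup$ of a sequence = its set of accumulation points. For $\mathcal H=(C,F,D,G)$, $F_C(x):=F(x)$ if $x\in C$ else $\emptyset$; $G_D$ analogously. A positive sequence is admissible if it tends to $0$ and is not summable; $\{H_k\}$, $H_k=(h_{s,k},h_{f,k})\in\mathbb R^2_{>0}$, is two-timescale admissible if both component sequences are admissible and $h_{s,k}/h_{f,k}\to0$. For $r\in\{s,f\}$: $\tau_{r,k}:=\sum_{i=0}^{k-1}h_{r,i+1}$, $m_r(t):=\max\{k:\tau_{r,k}\le t\}$, $\mathcal I_{r,n,T}:=\{k:n+1\le k\le m_r(\tau_{r,n}+T)\}$.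 For a hybrid inclusion $(C,F^1,D,G)$ with $F^1=F_s\times F_f$, $(\Phi,\{H_k\})$ is a two-timescale asymptotic simulation if $\Phi=(\phi_s,\phi_f)$ is a bounded complete hybrid sequence, $\{H_k\}$ is two-timescale admissible, and: (1) if $\Phi$ is complete in the $k$-direction, there is a bounded sequence $f_k=(f_{s,k},f_{f,k})$ with $\limsup_k(\Phi(k,\bar\jmath_k),f_k)\subset\mathrm{gph}(F^1_C)$ and, with $\hat f_{r,k+1}:=(\phi_r(k+1,\bar\jmath_k)-\phi_r(k,\bar\jmath_k))/h_{r,k+1}$, for all $T>0$, $r\in\{s,f\}$: $\lim_{n\to\infty}\sup_{k\in\mathcal I_{r,n,T}}|\sum_{i=n}^{k-1}h_{r,i+1}(\hat f_{r,i+1}-f_{r,i})|=0$; (2) if $\Phi$ is complete in the $j$-direction, $\limsup_j(\Phi(\bar k_j,j),\Phi(\bar k_j,j+1))\subset\mathrm{gph}(G_D)$. *)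

theory Defs
  imports "HOL-Analysis.Analysis" "HOL-Probability.Probability"
begin

definition compact_hsd :: "(nat \<times> nat) set \<Rightarrow> bool" where
  "compact_hsd S \<longleftrightarrow> (\<exists>J ks. ks 0 = 0 \<and> (\<forall>j<J. ks j \<le> ks (Suc j)) \<and>
      S = (\<Union>j<J. {ks j..ks (Suc j)} \<times> {j}))"

definition hybrid_seq_domain :: "(nat \<times> nat) set \<Rightarrow> bool" where
  "hybrid_seq_domain E \<longleftrightarrow> (\<exists>Sq. (\<forall>i. compact_hsd (Sq i)) \<and> (\<forall>i. Sq i \<subseteq> Sq (Suc i)) \<and>
      E = (\<Union>i. Sq i))"

text \<open>Complete: the domain is unbounded (in N x N), i.e. some coordinate is unbounded.\<close>
definition hs_complete :: "(nat \<times> nat) set \<Rightarrow> bool" where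
  "hs_complete E \<longleftrightarrow> \<not> bdd_above (fst ` E) \<or> \<not> bdd_above (snd ` E)"

definition jbar :: "(nat \<times> nat) set \<Rightarrow> nat \<Rightarrow> nat" where
  "jbar E k = Inf {j. (Suc k, j) \<in> E}"

definition kbar :: "(nat \<times> nat) set \<Rightarrow> nat \<Rightarrow> nat" where
  "kbar E j = Inf {k. (k, Suc j) \<in> E}"

text \<open>limsup of a sequence = its set of accumulation points.\<close>
definition acc_pts :: "(nat \<Rightarrow> 'b::topological_space) \<Rightarrow> 'b set" where
  "acc_pts x = {l. \<exists>r. strict_mono r \<and> (x \<circ> r) \<longlonglongrightarrow> l}"

text \<open>Sequences are indexed from 1; the value at index 0 is irrelevant.\<close>
definition admissible :: "(nat \<Rightarrow> real) \<Rightarrow> bool" where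
  "admissible h \<longleftrightarrow> (\<forall>k\<ge>1. h k > 0) \<and> h \<longlonglongrightarrow> 0 \<and> \<not> summable (\<lambda>k. h (Suc k))"

definition two_ts_admissible :: "(nat \<Rightarrow> real) \<Rightarrow> (nat \<Rightarrow> real) \<Rightarrow> bool" where
  "two_ts_admissible hs hf \<longleftrightarrow> admissible hs \<and> admissible hf \<and> (\<lambda>k. hs k / hf k) \<longlonglongrightarrow> 0"

definition tts_tau :: "(nat \<Rightarrow> real) \<Rightarrow> nat \<Rightarrow> real" where
  "tts_tau h k = (\<Sum>i<k. h (Suc i))"

definition tts_m :: "(nat \<Rightarrow> real) \<Rightarrow> real \<Rightarrow> nat" where
  "tts_m h t = (GREATEST k. tts_tau h k \<le> t)"

definition tts_I :: "(nat \<Rightarrow> real) \<Rightarrow> nat \<Rightarrow> real \<Rightarrow> nat set" where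
  "tts_I h n T = {k. n + 1 \<le> k \<and> k \<le> tts_m h (tts_tau h n + T)}"

text \<open>Condition: for all T > 0,
  lim_n sup_{k in I_{n,T}} |sum_{i=n}^{k-1} h_{i+1} (fhat_{i+1} - f_i)| = 0,
  with fhat_{i+1} = (phi(i+1, jb i) - phi(i, jb i)) / h_{i+1}
  (limit written out with epsilon; empty sup counts as 0).\<close>
definition tts_interp_cond ::
  "(nat \<Rightarrow> real) \<Rightarrow> (nat \<Rightarrow> nat \<Rightarrow> 'b::real_normed_vector) \<Rightarrow> (nat \<Rightarrow> nat) \<Rightarrow> (nat \<Rightarrow> 'b) \<Rightarrow> bool" where
  "tts_interp_cond h phi jb f \<longleftrightarrow>
     (\<forall>T>0. \<forall>\<epsilon>>0. eventually (\<lambda>n. \<forall>k\<in>tts_I h n T.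
        norm (\<Sum>i\<in>{n..<k}. h (Suc i) *\<^sub>R
           ((1 / h (Suc i)) *\<^sub>R (phi (Suc i) (jb i) - phi i (jb i)) - f i)) < \<epsilon>) sequentially)"

text \<open>Two-timescale asymptotic simulation of the hybrid inclusion (C, F1, D, G), with
  F1 = F_s x F_f given as a set-valued map on slow x fast states.\<close>
definition two_ts_asym_sim ::
  "('xs::real_normed_vector \<times> 'xf::real_normed_vector) set \<Rightarrow> ('xs \<times> 'xf \<Rightarrow> ('xs \<times> 'xf) set)
   \<Rightarrow> ('xs \<times> 'xf) set \<Rightarrow> ('xs \<times> 'xf \<Rightarrow> ('xs \<times> 'xf) set)
   \<Rightarrow> (nat \<times> nat) set \<Rightarrow> (nat \<Rightarrow> nat \<Rightarrow> 'xs \<times> 'xf) \<Rightarrow> (nat \<Rightarrow> real) \<Rightarrow> (nat \<Rightarrow> real) \<Rightarrow> bool" where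
  "two_ts_asym_sim C F1 D G E \<Phi> hs hf \<longleftrightarrow>
     hybrid_seq_domain E \<and> hs_complete E \<and> bounded ((\<lambda>(k, j). \<Phi> k j) ` E) \<and>
     two_ts_admissible hs hf \<and>
     (\<not> bdd_above (fst ` E) \<longrightarrow>
        (\<exists>f :: nat \<Rightarrow> 'xs \<times> 'xf. bounded (range f) \<and>
           acc_pts (\<lambda>k. (\<Phi> k (jbar E k), f k)) \<subseteq> {(x, v). x \<in> C \<and> v \<in> F1 x} \<and>
           tts_interp_cond hs (\<lambda>k j. fst (\<Phi> k j)) (jbar E) (\<lambda>k. fst (f k)) \<and>
           tts_interp_cond hf (\<lambda>k j. snd (\<Phi> k j)) (jbar E) (\<lambda>k. snd (f k)))) \<and>
     (\<not> bdd_above (snd ` E) \<longrightarrow>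
        acc_pts (\<lambda>j. (\<Phi> (kbar E j) j, \<Phi> (kbar E j) (Suc j))) \<subseteq> {(x, x'). x \<in> D \<and> x' \<in> G x})"

section \<open>Hybrid heavy ball data; states ((q,p,tau), xi)\<close>

definition HB_C :: "real \<Rightarrow> (('a::real_inner \<times> 'a \<times> real) \<times> 'a) set" where
  "HB_C Tc = {((q, p, \<tau>), \<xi>). (\<xi> \<bullet> p \<le> 0 \<and> \<tau> \<ge> Tc) \<or> \<tau> \<le> Tc}"

definition HB_D :: "real \<Rightarrow> (('a::real_inner \<times> 'a \<times> real) \<times> 'a) set" where
  "HB_D Tc = {((q, p, \<tau>), \<xi>). \<xi> \<bullet> p \<ge> 0 \<and> \<tau> \<ge> Tc}"

definition F_HB :: "real \<Rightarrow> real \<Rightarrow> ('a::real_normed_vector \<times> 'a \<times> real) \<Rightarrow> 'a \<Rightarrow> 'a \<times> 'a \<times> real" where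
  "F_HB \<kappa> Tc xs \<xi> = (case xs of (q, p, \<tau>) \<Rightarrow> (p, - (\<kappa> *\<^sub>R p) - \<xi>, min 1 (2 - \<tau> / Tc)))"

definition G_HB :: "('a::real_normed_vector \<times> 'a \<times> real) \<Rightarrow> 'a \<times> 'a \<times> real" where
  "G_HB xs = (case xs of (q, p, \<tau>) \<Rightarrow> (q, 0, 0))"

definition HB_F1 :: "real \<Rightarrow> real \<Rightarrow> ('a \<Rightarrow> 'a) \<Rightarrow> ('a::real_normed_vector \<times> 'a \<times> real) \<times> 'a
     \<Rightarrow> (('a \<times> 'a \<times> real) \<times> 'a) set" where
  "HB_F1 \<kappa> Tc g x = (case x of (xs, \<xi>) \<Rightarrow> {(F_HB \<kappa> Tc xs \<xi>, - \<xi> + g (fst xs))})"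

definition HB_G :: "('a::real_normed_vector \<times> 'a \<times> real) \<times> 'a \<Rightarrow> (('a \<times> 'a \<times> real) \<times> 'a) set" where
  "HB_G x = (case x of (xs, \<xi>) \<Rightarrow> {(G_HB xs, \<xi>)})"

definition gen_filt :: "'w measure \<Rightarrow> (nat \<Rightarrow> 'w \<Rightarrow> nat) \<Rightarrow> nat \<Rightarrow> 'w measure" where
  "gen_filt M y k = sigma (space M) {y i -` A \<inter> space M | i A. i \<in> {1..k}}"

text \<open>Measurability of a set-valued map (Effros/Rockafellar-Wets sense).\<close>
definition setval_measurable :: "'w measure \<Rightarrow> ('w \<Rightarrow> 'b::topological_space set) \<Rightarrow> bool" where
  "setval_measurable Fm S \<longleftrightarrow> (\<forall>U. open U \<longrightarrow> {\<omega> \<in> space Fm. S \<omega> \<inter> U \<noteq> {}} \<in> sets Fm)"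

definition S_solution ::
  "'w measure \<Rightarrow> (nat \<Rightarrow> 'w \<Rightarrow> nat) \<Rightarrow> (nat \<Rightarrow> 'a \<Rightarrow> 'a) \<Rightarrow> real \<Rightarrow> real
   \<Rightarrow> (nat \<Rightarrow> real) \<Rightarrow> (nat \<Rightarrow> real)
   \<Rightarrow> ('w \<Rightarrow> (nat \<times> nat) set) \<Rightarrow> ('w \<Rightarrow> nat \<Rightarrow> nat \<Rightarrow> ('a::real_inner \<times> 'a \<times> real) \<times> 'a) \<Rightarrow> bool" where
  "S_solution M y gi \<kappa> Tc hs hf E X \<longleftrightarrow>
     (\<forall>\<omega>\<in>space M. hybrid_seq_domain (E \<omega>) \<and> hs_complete (E \<omega>) \<and>
        (\<forall>k j. (k, j) \<in> E \<omega> \<and> (Suc k, j) \<in> E \<omega> \<longrightarrow>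
           X \<omega> k j \<in> HB_C Tc \<and>
           fst (X \<omega> (Suc k) j) = fst (X \<omega> k j) + hs (Suc k) *\<^sub>R F_HB \<kappa> Tc (fst (X \<omega> k j)) (snd (X \<omega> k j)) \<and>
           snd (X \<omega> (Suc k) j) = snd (X \<omega> k j) +
              hf (Suc k) *\<^sub>R (gi (y (Suc k) \<omega>) (fst (fst (X \<omega> k j))) - snd (X \<omega> k j))) \<and>
        (\<forall>k j. (k, j) \<in> E \<omega> \<and> (k, Suc j) \<in> E \<omega> \<longrightarrow>
           X \<omega> k j \<in> HB_D Tc \<and>
           fst (X \<omega> k (Suc j)) = G_HB (fst (X \<omega> k j)) \<and>
           snd (X \<omega> k (Suc j)) = snd (X \<omega> k j))) \<and>
     (\<forall>k. setval_measurable (gen_filt M y k) (\<lambda>\<omega>. {(k, j, X \<omega> k j) | j. (k, j) \<in> E \<omega>}))"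

end

theory Submission
  imports Defs
begin


lemma ks_mono:
  assumes "\<forall>j<J. ks j \<le> ks (Suc j)" "a \<le> b" "b \<le> J"
  shows "ks a \<le> (ks b :: nat)"
  using assms(2,3)
proof (induction b)
  case 0 then show ?case by simp
next
  case (Suc b)
  show ?case
  proof (cases "a = Suc b")
    case False
    then have "ks a \<le> ks b" using Suc by simp
    also have "ks b \<le> ks (Suc b)" using assms(1) Suc.prems by simp
    finally show ?thesis .
  qed simp
qed

lemma hsd_two:
  assumes "hybrid_seq_domain E" "a \<in> E" "b \<in> E"
  obtains J ks where "ks 0 = 0" "\<forall>j<J. ks j \<le> ks (Suc j)"
    "a \<in> (\<Union>j<J. {ks j..ks (Suc j)} \<times> {j})" "b \<in> (\<Union>j<J. {ks j..ks (Suc j)} \<times> {j})"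
    "(\<Union>j<J. {ks j..ks (Suc j)} \<times> {j}) \<subseteq> E"
proof -
  obtain Sq where cs: "\<And>i. compact_hsd (Sq i)" and mono: "\<And>i. Sq i \<subseteq> Sq (Suc i)"
    and E: "E = (\<Union>i. Sq i)"
    using assms(1) unfolding hybrid_seq_domain_def by blast
  obtain i1 i2 where i1: "a \<in> Sq i1" and i2: "b \<in> Sq i2" using assms(2,3) E by blast
  have m: "Sq i \<subseteq> Sq i'" if "i \<le> i'" for i i'
    using lift_Suc_mono_le[of Sq, OF mono that] .
  have "a \<in> Sq (max i1 i2)" "b \<in> Sq (max i1 i2)" using i1 i2 m[of i1 "max i1 i2"] m[of i2 "max i1 i2"] by auto
  moreover have "Sq (max i1 i2) \<subseteq> E" using E by blast
  moreover obtain J ks where "ks 0 = 0" "\<forall>j<J. ks j \<le> ks (Suc j)"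
      "Sq (max i1 i2) = (\<Union>j<J. {ks j..ks (Suc j)} \<times> {j})"
    using cs[of "max i1 i2"] unfolding compact_hsd_def by blast
  ultimately show ?thesis by (intro that[of ks J]) auto
qed

lemma mem_seg: "((k, j) \<in> (\<Union>j'<J. {ks j'..ks (Suc j')} \<times> {j'})) \<longleftrightarrow> j < J \<and> ks j \<le> k \<and> k \<le> (ks (Suc j)::nat)"
  by auto

lemma jbar_mem:
  assumes H: "hybrid_seq_domain E" and m: "(Suc k, j) \<in> E"
  shows "(k, jbar E k) \<in> E \<and> (Suc k, jbar E k) \<in> E"
proof -
  define j0 where "j0 = jbar E k"
  have j0L: "j0 = (LEAST j. (Suc k, j) \<in> E)" unfolding j0_def jbar_def Inf_nat_def by simp
  have in0: "(Suc k, j0) \<in> E" unfolding j0L by (rule LeastI[of _ j]) (rule m)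
  have least: "j0 \<le> j'" if "(Suc k, j') \<in> E" for j' unfolding j0L using that by (rule Least_le)
  obtain J ks where ks0: "ks 0 = 0" and mo: "\<forall>j<J. ks j \<le> ks (Suc j)"
    and a: "(Suc k, j0) \<in> (\<Union>j<J. {ks j..ks (Suc j)} \<times> {j})"
    and "(Suc k, j0) \<in> (\<Union>j<J. {ks j..ks (Suc j)} \<times> {j})"
    and sub: "(\<Union>j<J. {ks j..ks (Suc j)} \<times> {j}) \<subseteq> E"
    by (rule hsd_two[OF H in0 in0])
  have a': "j0 < J" "ks j0 \<le> Suc k" "Suc k \<le> ks (Suc j0)" using a by auto
  have "ks j0 \<le> k"
  proof (rule ccontr)
    assume "\<not> ks j0 \<le> k"
    then have e: "ks j0 = Suc k" using a' by simp
    have "j0 \<noteq> 0"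
    proof
      assume "j0 = 0" then show False using ks0 e by simp
    qed
    then obtain j1 where j1: "j0 = Suc j1" by (cases j0) auto
    have "ks j1 \<le> ks j0" using mo a' j1 by auto
    then have "(Suc k, j1) \<in> E" using sub a' e j1 by (auto simp: mem_seg)
    then have "j0 \<le> j1" by (rule least)
    then show False using j1 by simp
  qed
  then have "(k, j0) \<in> E" using sub a' by (force simp: mem_seg)
  then show ?thesis using in0 j0_def by simp
qed

lemma kbar_mem:
  assumes H: "hybrid_seq_domain E" and m: "(k, Suc j) \<in> E"
  shows "(kbar E j, j) \<in> E \<and> (kbar E j, Suc j) \<in> E"
proof -
  define k0 where "k0 = kbar E j"
  have k0L: "k0 = (LEAST k. (k, Suc j) \<in> E)" unfolding k0_def kbar_def Inf_nat_def by simp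
  have in0: "(k0, Suc j) \<in> E" unfolding k0L by (rule LeastI[of _ k]) (rule m)
  have least: "k0 \<le> k'" if "(k', Suc j) \<in> E" for k' unfolding k0L using that by (rule Least_le)
  obtain J ks where ks0: "ks 0 = 0" and mo: "\<forall>j<J. ks j \<le> ks (Suc j)"
    and a: "(k0, Suc j) \<in> (\<Union>j<J. {ks j..ks (Suc j)} \<times> {j})"
    and "(k0, Suc j) \<in> (\<Union>j<J. {ks j..ks (Suc j)} \<times> {j})"
    and sub: "(\<Union>j<J. {ks j..ks (Suc j)} \<times> {j}) \<subseteq> E"
    by (rule hsd_two[OF H in0 in0])
  have a': "Suc j < J" "ks (Suc j) \<le> k0" "k0 \<le> ks (Suc (Suc j))" using a by auto
  have "(ks (Suc j), Suc j) \<in> E" using sub a' mo by (auto simp: mem_seg)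
  then have "k0 \<le> ks (Suc j)" by (rule least)
  then have "k0 = ks (Suc j)" using a' by simp
  then have "(k0, j) \<in> E" using sub a' mo by (auto simp: mem_seg)
  then show ?thesis using in0 k0_def by simp
qed

lemma hsd_mono:
  assumes H: "hybrid_seq_domain E" and "(k, j) \<in> E" "(k', j') \<in> E" "k < k'"
  shows "j \<le> j'"
proof -
  obtain J ks where ks0: "ks 0 = 0" and mo: "\<forall>j<J. ks j \<le> ks (Suc j)"
    and a: "(k, j) \<in> (\<Union>j<J. {ks j..ks (Suc j)} \<times> {j})"
    and b: "(k', j') \<in> (\<Union>j<J. {ks j..ks (Suc j)} \<times> {j})"
    and "(\<Union>j<J. {ks j..ks (Suc j)} \<times> {j}) \<subseteq> E"
    by (rule hsd_two[OF H assms(2,3)])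
  show ?thesis
  proof (rule ccontr)
    assume "\<not> j \<le> j'"
    then have "Suc j' \<le> j" by simp
    moreover have "j < J" using a by auto
    ultimately have "ks (Suc j') \<le> ks j" using ks_mono[OF mo] by simp
    then show False using a b \<open>k < k'\<close> by auto
  qed
qed

lemma hsd_interval:
  assumes H: "hybrid_seq_domain E" and "(k, j1) \<in> E" "(k, j2) \<in> E" "j1 \<le> j" "j \<le> j2"
  shows "(k, j) \<in> E"
proof -
  obtain J ks where ks0: "ks 0 = 0" and mo: "\<forall>j<J. ks j \<le> ks (Suc j)"
    and a: "(k, j1) \<in> (\<Union>j<J. {ks j..ks (Suc j)} \<times> {j})"
    and b: "(k, j2) \<in> (\<Union>j<J. {ks j..ks (Suc j)} \<times> {j})"
    and sub: "(\<Union>j<J. {ks j..ks (Suc j)} \<times> {j}) \<subseteq> E"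
    by (rule hsd_two[OF H assms(2,3)])
  have "j < J" using b assms(5) by auto
  moreover have "ks j \<le> ks j2" using ks_mono[OF mo assms(5)] b by auto
  moreover have "ks (Suc j1) \<le> ks (Suc j)" using ks_mono[OF mo, of "Suc j1" "Suc j"] assms(4) \<open>j < J\<close> by auto
  ultimately have "(k, j) \<in> (\<Union>j<J. {ks j..ks (Suc j)} \<times> {j})" using a b by auto
  then show ?thesis using sub by blast
qed

lemma hsd_k_all:
  assumes H: "hybrid_seq_domain E" and nb: "\<not> bdd_above (fst ` E)"
  shows "\<exists>j. (Suc k, j) \<in> E"
proof -
  have "\<not> (\<forall>x\<in>fst ` E. x \<le> Suc k)" using nb by (auto simp: bdd_above_def)
  then obtain x where x: "x \<in> E" "fst x > Suc k" by (auto simp: not_le)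
  have "\<exists>j. (Suc k + d, j) \<in> E" if "\<exists>j. (Suc k + d + e, j) \<in> E" for d e
    using that
  proof (induction e arbitrary: d)
    case 0 then show ?case by simp
  next
    case (Suc e)
    then obtain j where "(Suc (Suc k + d + e), j) \<in> E" by auto
    then have "(Suc k + d + e, jbar E (Suc k + d + e)) \<in> E" using jbar_mem[OF H] by blast
    then show ?case using Suc.IH by blast
  qed
  from this[of 0 "fst x - Suc k"] show ?thesis using x
    by (metis add_0_right le_add_diff_inverse less_imp_le prod.collapse)
qed

lemma hsd_j_all:
  assumes H: "hybrid_seq_domain E" and nb: "\<not> bdd_above (snd ` E)"
  shows "\<exists>k. (k, Suc j) \<in> E"
proof -
  have "\<not> (\<forall>x\<in>snd ` E. x \<le> Suc j)" using nb by (auto simp: bdd_above_def)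
  then obtain x where x: "x \<in> E" "snd x > Suc j" by (auto simp: not_le)
  have "\<exists>k. (k, Suc j + d) \<in> E" if "\<exists>k. (k, Suc j + d + e) \<in> E" for d e
    using that
  proof (induction e arbitrary: d)
    case 0 then show ?case by simp
  next
    case (Suc e)
    then obtain k where "(k, Suc (Suc j + d + e)) \<in> E" by auto
    then have "(kbar E (Suc j + d + e), Suc j + d + e) \<in> E" using kbar_mem[OF H] by blast
    then show ?case using Suc.IH by blast
  qed
  from this[of 0 "snd x - Suc j"] show ?thesis using x
    by (metis add_0_right le_add_diff_inverse less_imp_le prod.collapse)
qed



lemma sum_ivl_eq: "m \<le> (n::nat) \<Longrightarrow> sum (f::nat\<Rightarrow>real) {m..<n} = sum f {..<n} - sum f {..<m}"
  by (metis atLeast0LessThan sum_diff_nat_ivl zero_le)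

lemma tau_Suc: "tts_tau h (Suc k) = tts_tau h k + h (Suc k)"
  by (simp add: tts_tau_def)

lemma tau_diff: "n \<le> k \<Longrightarrow> tts_tau h k - tts_tau h n = (\<Sum>i\<in>{n..<k}. h (Suc i))"
  unfolding tts_tau_def by (simp add: sum_ivl_eq)

lemma tau_mono:
  assumes pos: "\<And>k. k \<ge> 1 \<Longrightarrow> h k > 0" and "n \<le> k"
  shows "tts_tau h n \<le> tts_tau h k"
proof -
  have "0 \<le> (\<Sum>i\<in>{n..<k}. h (Suc i))" by (intro sum_nonneg) (simp add: less_imp_le pos)
  then show ?thesis using tau_diff[OF assms(2), of h] by simp
qed

lemma tau_nonneg:
  assumes pos: "\<And>k. k \<ge> 1 \<Longrightarrow> h k > 0"
  shows "0 \<le> tts_tau h k"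
  using tau_mono[of h 0 k] pos by (simp add: tts_tau_def)

lemma tau_unb:
  assumes pos: "\<And>k. k \<ge> 1 \<Longrightarrow> h k > 0" and ns: "\<not> summable (\<lambda>k. h (Suc k))"
  shows "\<exists>k. tts_tau h k > t"
proof (rule ccontr)
  assume "\<not> (\<exists>k. tts_tau h k > t)"
  then have "\<And>k. sum (\<lambda>k. h (Suc k)) {..<k} \<le> t" by (simp add: tts_tau_def not_less)
  then have "summable (\<lambda>k. h (Suc k))"
    by (intro summableI_nonneg_bounded[where x=t]) (simp_all add: less_imp_le pos)
  then show False using ns by simp
qed

lemma tts_I_window:
  assumes pos: "\<And>k. k \<ge> 1 \<Longrightarrow> h k > 0" and ns: "\<not> summable (\<lambda>k. h (Suc k))"
    and T: "T > 0" and k: "k \<in> tts_I h n T"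
  shows "n \<le> k \<and> tts_tau h k \<le> tts_tau h n + T"
proof -
  define t where "t = tts_tau h n + T"
  obtain b where b: "tts_tau h b > t" using tau_unb[OF pos ns] by blast
  have bnd: "y \<le> b" if "tts_tau h y \<le> t" for y
  proof (rule ccontr)
    assume "\<not> y \<le> b"
    then have "tts_tau h b \<le> tts_tau h y" using tau_mono[OF pos] by simp
    then show False using b that by simp
  qed
  have "tts_tau h n \<le> t" using T t_def by simp
  then have G: "tts_tau h (GREATEST k. tts_tau h k \<le> t) \<le> t"
    by (rule GreatestI_nat) (rule bnd)
  have "k \<le> (GREATEST k. tts_tau h k \<le> t)" using k unfolding tts_I_def tts_m_def t_def by simp
  then have "tts_tau h k \<le> t" using tau_mono[OF pos] G by (meson order_trans)
  then show ?thesis using k unfolding tts_I_def t_def by simp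
qed

definition gr :: "(nat \<Rightarrow> real) \<Rightarrow> nat \<Rightarrow> nat \<Rightarrow> nat" where
  "gr h l a = (LEAST k. real a \<le> tts_tau h k * (real l + 1))"

lemma window_lemma:
  fixes h v :: "nat \<Rightarrow> real"
  assumes pos: "\<And>k. k \<ge> 1 \<Longrightarrow> h k > 0" and ns: "\<not> summable (\<lambda>k. h (Suc k))"
    and vb: "\<And>i. \<bar>v i\<bar> \<le> h (Suc i)"
    and H: "\<And>l d j. eventually (\<lambda>a. \<bar>\<Sum>i\<in>{gr h l a..<gr h l (a+d)}. v i\<bar> < 1/(real j+1)) sequentially"
    and T: "T > 0" and e: "e > 0"
  shows "eventually (\<lambda>n. \<forall>k. n \<le> k \<longrightarrow> tts_tau h k \<le> tts_tau h n + T \<longrightarrow> \<bar>\<Sum>i\<in>{n..<k}. v i\<bar> < e) sequentially"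
proof -
  obtain l where l: "inverse (real (Suc l)) < e/4" using reals_Archimedean[of "e/4"] e by auto
  obtain j where j: "inverse (real (Suc j)) < e/2" using reals_Archimedean[of "e/2"] e by auto
  define c where "c = real l + 1"
  have c: "c > 0" "1/c < e/4" using l by (auto simp: c_def field_simps)
  have j': "1/(real j + 1) < e/2" using j by (simp add: field_simps)
  define u where "u k = tts_tau h k * c" for k
  define g where "g = gr h l"
  have u_mono: "u n \<le> u k" if "n \<le> k" for n k
    using tau_mono[OF pos that] c by (simp add: u_def)
  have u_nn: "0 \<le> u k" for k using tau_nonneg[OF pos] c by (simp add: u_def)
  have g_def': "g a = (LEAST k. real a \<le> u k)" for a by (simp add: g_def gr_def u_def c_def)
  have ex: "\<exists>k. real a \<le> u k" for a
  proof -
    obtain k where "tts_tau h k > real a / c" using tau_unb[OF pos ns] by blast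
    then show ?thesis using c by (auto simp: u_def field_simps intro!: exI[of _ k])
  qed
  have g1: "real a \<le> u (g a)" for a unfolding g_def' using ex[of a] by (rule LeastI_ex)
  have g2: "g a \<le> n" if "real a \<le> u n" for a n unfolding g_def' using that by (rule Least_le)
  have g3: "g a \<le> g b" if "a \<le> b" for a b using g2 g1[of b] that by (meson of_nat_le_iff order_trans)
  define L where "L = nat \<lceil>T * c\<rceil>"
  have "eventually (\<lambda>a. \<forall>d\<in>{..L}. \<bar>\<Sum>i\<in>{g a..<g (a+d)}. v i\<bar> < 1/(real j+1)) sequentially"
    by (intro eventually_ball_finite) (auto simp: g_def H)
  then obtain A0 where A0: "\<And>a d. a \<ge> A0 \<Longrightarrow> d \<le> L \<Longrightarrow> \<bar>\<Sum>i\<in>{g a..<g (a+d)}. v i\<bar> < 1/(real j+1)"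
    unfolding eventually_sequentially by auto
  obtain K where K: "tts_tau h K > real A0 / c" using tau_unb[OF pos ns] by blast
  define P where "P x = (\<Sum>i<x. v i)" for x
  have Pd: "(\<Sum>i\<in>{x..<y}. v i) = P y - P x" if "x \<le> y" for x y using sum_ivl_eq[OF that] by (simp add: P_def)
  have small: "\<bar>P y - P x\<bar> < 1/c" if "x \<le> y" "u y - u x < 1" for x y
  proof -
    have "\<bar>P y - P x\<bar> = \<bar>\<Sum>i\<in>{x..<y}. v i\<bar>" using Pd[OF that(1)] by simp
    also have "\<dots> \<le> (\<Sum>i\<in>{x..<y}. h (Suc i))" by (rule order_trans[OF sum_abs]) (intro sum_mono vb)
    also have "\<dots> = tts_tau h y - tts_tau h x" using tau_diff[OF that(1)] by simp
    also have "\<dots> = (u y - u x) / c" using c by (simp add: u_def field_simps)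
    also have "\<dots> < 1 / c" using that(2) c by (simp add: divide_strict_right_mono)
    finally show ?thesis .
  qed
  show ?thesis
  proof (rule eventually_sequentiallyI[of K], intro allI impI)
    fix n k assume nK: "K \<le> n" and nk: "n \<le> k" and kw: "tts_tau h k \<le> tts_tau h n + T"
    define a where "a = nat \<lfloor>u n\<rfloor>"
    define b where "b = nat \<lfloor>u k\<rfloor>"
    have ra: "real a \<le> u n" "u n < real a + 1" using u_nn[of n] unfolding a_def
      by (simp_all add: of_nat_floor real_of_int_floor_add_one_gt)
    have rb: "real b \<le> u k" "u k < real b + 1" using u_nn[of k] unfolding b_def
      by (simp_all add: of_nat_floor real_of_int_floor_add_one_gt)
    have "u K \<le> u n" using u_mono nK by simp
    moreover have "real A0 < u K" using K c by (simp add: u_def field_simps)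
    ultimately have aA0: "A0 \<le> a" using ra by linarith
    have ab: "a \<le> b" using u_mono[OF nk] ra rb by linarith
    have ukn: "u k \<le> u n + T * c"
      using mult_right_mono[OF kw less_imp_le[OF c(1)]] by (simp add: u_def algebra_simps)
    have "real L \<ge> T * c" unfolding L_def by linarith
    then have "real b < real a + 1 + real L" using ra rb ukn by linarith
    then have bL: "b - a \<le> L" by linarith
    have gan: "g a \<le> n" using g2 ra by simp
    have gbk: "g b \<le> k" using g2 rb by simp
    have gab: "g a \<le> g b" using g3 ab by simp
    have eq: "(\<Sum>i\<in>{n..<k}. v i) = (P (g b) - P (g a)) + (P k - P (g b)) - (P n - P (g a))"
      using Pd nk by simp
    have t1: "\<bar>P (g b) - P (g a)\<bar> < e/2"
      using A0[OF aA0 bL] ab j' Pd[OF gab] by simp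
    have t2: "\<bar>P k - P (g b)\<bar> < 1/c" using small[OF gbk] g1[of b] rb by linarith
    have t3: "\<bar>P n - P (g a)\<bar> < 1/c" using small[OF gan] g1[of a] ra by linarith
    show "\<bar>\<Sum>i\<in>{n..<k}. v i\<bar> < e" unfolding eq using t1 t2 t3 c by linarith
  qed
qed



lemma gr_ge:
  assumes pos: "\<And>k. k \<ge> 1 \<Longrightarrow> h k > 0" and ns: "\<not> summable (\<lambda>k. h (Suc k))"
  shows "real a \<le> tts_tau h (gr h l a) * (real l + 1)"
proof -
  obtain k where "tts_tau h k > real a / (real l + 1)" using tau_unb[OF pos ns] by blast
  then have "real a \<le> tts_tau h k * (real l + 1)" by (simp add: field_simps)
  then show ?thesis unfolding gr_def by (rule LeastI)
qed

lemma gr_le: "real a \<le> tts_tau h n * (real l + 1) \<Longrightarrow> gr h l a \<le> n"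
  unfolding gr_def by (rule Least_le)

lemma gr_mono:
  assumes pos: "\<And>k. k \<ge> 1 \<Longrightarrow> h k > 0" and ns: "\<not> summable (\<lambda>k. h (Suc k))" and "a \<le> b"
  shows "gr h l a \<le> gr h l b"
  using gr_le gr_ge[OF pos ns, of b l] assms(3) by (meson of_nat_le_iff order_trans)

lemma gr_upper:
  assumes Hm: "\<And>k. h k \<le> Hm" and Hm0: "0 \<le> Hm"
  shows "tts_tau h (gr h l a) \<le> real a / (real l + 1) + Hm"
proof (cases "gr h l a")
  case 0
  show ?thesis using 0 Hm0 by (simp add: tts_tau_def)
next
  case (Suc k0)
  have "\<not> real a \<le> tts_tau h k0 * (real l + 1)"
    using gr_le[of a h k0 l] Suc by auto
  then have "tts_tau h k0 < real a / (real l + 1)" by (simp add: field_simps)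
  then show ?thesis using Suc Hm[of "Suc k0"] by (simp add: tau_Suc)
qed

lemma exp_powr_bound:
  fixes x p :: real
  assumes "x > 0" "p > 0"
  shows "exp (- x) \<le> (p / x) powr p"
proof -
  have "x / p \<le> exp (x / p)" using exp_ge_add_one_self[of "x/p"] by linarith
  then have "(x / p) powr p \<le> exp (x / p) powr p" using assms by (intro powr_mono2) auto
  also have "\<dots> = exp x" using assms by (simp add: powr_def)
  finally have "(x / p) powr p \<le> exp x" .
  moreover have "(x / p) powr p > 0" using assms by simp
  ultimately have "inverse (exp x) \<le> inverse ((x / p) powr p)" by (rule le_imp_inverse_le)
  then show ?thesis using assms by (simp add: exp_minus powr_divide)
qed

lemma sq_sum_powr:
  fixes h :: "nat \<Rightarrow> real"
  assumes fin: "finite I" and nn: "\<And>k. k \<in> I \<Longrightarrow> 0 \<le> h k" and p: "p > 0"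
  shows "(\<Sum>k\<in>I. (h k)\<^sup>2) powr p \<le> (\<Sum>k\<in>I. h k powr p) * (\<Sum>k\<in>I. h k) powr p"
proof -
  define Q where "Q = (\<Sum>k\<in>I. h k powr p) powr (1/p)"
  have Snn: "0 \<le> (\<Sum>k\<in>I. h k powr p)" by (intro sum_nonneg) simp
  have hQ: "h k \<le> Q" if k: "k \<in> I" for k
  proof -
    have "h k = (h k powr p) powr (1/p)" using nn[OF k] p by (simp add: powr_powr)
    also have "\<dots> \<le> Q" unfolding Q_def using p
      by (intro powr_mono2) (auto intro: member_le_sum[OF k] fin)
    finally show ?thesis .
  qed
  have Qnn: "0 \<le> Q" unfolding Q_def by simp
  have "(\<Sum>k\<in>I. (h k)\<^sup>2) \<le> (\<Sum>k\<in>I. Q * h k)"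
    by (intro sum_mono) (simp add: power2_eq_square mult_right_mono hQ nn)
  also have "\<dots> = Q * (\<Sum>k\<in>I. h k)" by (simp add: sum_distrib_left)
  finally have le: "(\<Sum>k\<in>I. (h k)\<^sup>2) \<le> Q * (\<Sum>k\<in>I. h k)" .
  have "(\<Sum>k\<in>I. (h k)\<^sup>2) powr p \<le> (Q * (\<Sum>k\<in>I. h k)) powr p"
    using p le by (intro powr_mono2) (auto intro: sum_nonneg)
  also have "\<dots> = Q powr p * (\<Sum>k\<in>I. h k) powr p"
    using Qnn by (simp add: powr_mult sum_nonneg nn)
  also have "Q powr p = (\<Sum>k\<in>I. h k powr p)" unfolding Q_def using Snn p by (simp add: powr_powr)
  finally show ?thesis .
qed



lemma noise_blocks:
  fixes M :: "'w measure" and y :: "nat \<Rightarrow> 'w \<Rightarrow> nat" and hf :: "nat \<Rightarrow> real"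
  assumes P: "prob_space M"
    and ymeas: "\<And>k. k \<ge> 1 \<Longrightarrow> y k \<in> measurable M (count_space UNIV)"
    and yindep: "prob_space.indep_vars M (\<lambda>_. count_space UNIV) y {1..}"
    and yunif: "\<And>k. k \<ge> 1 \<Longrightarrow> distr M (count_space UNIV) (y k) = measure_pmf (pmf_of_set {1..N})"
    and N: "N \<ge> 1" and m: "m \<in> {1..N}"
    and pos: "\<And>k. k \<ge> 1 \<Longrightarrow> hf k > 0" and ns: "\<not> summable (\<lambda>k. hf (Suc k))"
    and Hm: "\<And>k. hf k \<le> Hm" and Hm0: "0 \<le> Hm"
    and p: "p > 0" and sp: "summable (\<lambda>k. hf (Suc k) powr p)"
    and e: "e > 0"
  shows "AE \<omega> in M. eventually (\<lambda>a. \<bar>\<Sum>i\<in>{gr hf l a..<gr hf l (a+d)}.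
            hf (Suc i) * ((if y (Suc i) \<omega> = m then 1 else 0) - 1 / real N)\<bar> < e) sequentially"
proof -
  interpret prob_space M by (rule P)
  define g where "g = gr hf l"
  define c where "c = real l + 1"
  have c: "c > 0" by (simp add: c_def)
  define Z where "Z k \<omega> = hf k * ((if y k \<omega> = m then 1 else 0) - 1 / real N)" for k \<omega>
  have Zeq: "Z = (\<lambda>k \<omega>. hf k * ((if y k \<omega> = m then 1 else 0) - 1 / real N))"
    by (simp add: fun_eq_iff Z_def)
  define I where "I a = {Suc (g a)..<Suc (g (a+d))}" for a
  define A where "A a = {\<omega> \<in> space M. e \<le> \<bar>\<Sum>k\<in>I a. Z k \<omega>\<bar>}" for a
  have gmono: "g a \<le> g b" if "a \<le> b" for a b unfolding g_def by (rule gr_mono[OF pos ns that])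
  have reidx: "(\<Sum>i\<in>{g a..<g (a+d)}. hf (Suc i) * ((if y (Suc i) \<omega> = m then 1 else 0) - 1 / real N))
      = (\<Sum>k\<in>I a. Z k \<omega>)" for a \<omega>
    unfolding I_def Z_def sum.shift_bounds_Suc_ivl ..
  have I1: "I a \<subseteq> {1..}" for a by (auto simp: I_def)
  have finI: "finite (I a)" for a by (simp add: I_def)
  have Zmeas: "Z k \<in> borel_measurable M" if "k \<ge> 1" for k
  proof -
    have "(\<lambda>x. hf k * ((if x = m then 1 else 0) - 1/real N)) \<in> borel_measurable (count_space UNIV)" by simp
    from measurable_compose[OF ymeas[OF that] this] show ?thesis by (simp add: Zeq)
  qed
  have Asets: "A a \<in> sets M" for a
  proof -
    have [measurable]: "(\<lambda>\<omega>. \<bar>\<Sum>k\<in>I a. Z k \<omega>\<bar>) \<in> borel_measurable M"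
      using I1 Zmeas by (intro borel_measurable_abs borel_measurable_sum) auto
    show ?thesis unfolding A_def by measurable
  qed
  have EZ: "expectation (Z k) = 0" if k1: "k \<ge> 1" for k
  proof -
    let ?f = "\<lambda>x. hf k * ((if x = m then 1 else 0) - 1/real N)"
    have "expectation (Z k) = integral\<^sup>L (distr M (count_space UNIV) (y k)) ?f"
      by (subst integral_distr[OF ymeas[OF k1]]) (simp_all add: Zeq)
    also have "\<dots> = measure_pmf.expectation (pmf_of_set {1..N}) ?f" using yunif[OF k1] by simp
    also have "\<dots> = (\<Sum>x\<in>{1..N}. ?f x) / real N" using N by (subst integral_pmf_of_set) auto
    also have "(\<Sum>x\<in>{1..N}. ?f x) = hf k * ((\<Sum>x\<in>{1..N}. (if x = m then 1 else 0)) - (\<Sum>x\<in>{1..N}. 1/real N))"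
      by (simp add: sum_distrib_left[symmetric] sum_subtractf)
    also have "\<dots> = 0" using m N by simp
    finally show ?thesis by simp
  qed
  define dW where "dW = real d / c + Hm"
  define C where "C = 2 * (p / (2 * e\<^sup>2)) powr p * dW powr p"
  have bound: "measure M (A a) \<le> C * (\<Sum>k\<in>I a. hf k powr p)" for a
  proof (cases "I a = {}")
    case True
    then have "A a = {}" using e by (auto simp: A_def)
    then show ?thesis by (auto simp: C_def intro!: mult_nonneg_nonneg sum_nonneg)
  next
    case False
    define lo where "lo k = - hf k / real N" for k
    define hi where "hi k = hf k * (1 - 1 / real N)" for k
    have hilo: "hi k - lo k = hf k" for k by (simp add: hi_def lo_def algebra_simps)
    interpret H: Hoeffding_ineq M "I a" Z lo hi "\<Sum>k\<in>I a. expectation (Z k)"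
    proof unfold_locales
      show "finite (I a)" by (rule finI)
      have "indep_vars (\<lambda>_. count_space UNIV) y (I a)" by (rule indep_vars_subset[OF yindep I1])
      then have "indep_vars (\<lambda>_. borel) (\<lambda>k \<omega>. (\<lambda>k x. hf k * ((if x = m then 1 else 0) - 1/real N)) k (y k \<omega>)) (I a)"
        by (rule indep_vars_compose2) simp
      then show "indep_vars (\<lambda>_. borel) Z (I a)" by (simp add: Zeq)
    next
      fix i assume "i \<in> I a"
      then have "hf i > 0" using pos I1 by auto
      then show "AE x in M. Z i x \<in> {lo i..hi i}"
        using N by (intro AE_I2) (auto simp: Z_def lo_def hi_def field_simps)
    qed
    have mu: "(\<Sum>k\<in>I a. expectation (Z k)) = 0" using EZ I1 by (intro sum.neutral) auto
    define \<sigma> where "\<sigma> = (\<Sum>k\<in>I a. (hf k)\<^sup>2)"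
    have hpI: "0 < hf i" if "i \<in> I a" for i using that I1[of a] pos by auto
    have \<sigma>pos: "\<sigma> > 0" unfolding \<sigma>_def using False finI hpI
      by (intro sum_pos) (auto, metis less_irrefl)
    have h1: "measure M (A a) \<le> 2 * exp (-2 * e\<^sup>2 / (\<Sum>k\<in>I a. (hi k - lo k)\<^sup>2))"
      using H.Hoeffding_ineq_abs_ge[of e] e \<sigma>pos unfolding A_def mu hilo \<sigma>_def by simp
    have h1': "exp (-2 * e\<^sup>2 / (\<Sum>k\<in>I a. (hi k - lo k)\<^sup>2)) = exp (- (2 * e\<^sup>2 / \<sigma>))"
      unfolding hilo \<sigma>_def by simp
    define K1 where "K1 = (p / (2 * e\<^sup>2)) powr p"
    define S where "S = (\<Sum>k\<in>I a. hf k powr p)"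
    have K1: "0 \<le> K1" unfolding K1_def by simp
    have S: "0 \<le> S" unfolding S_def by (intro sum_nonneg) simp
    have h2: "exp (- (2 * e\<^sup>2 / \<sigma>)) \<le> (p / (2 * e\<^sup>2 / \<sigma>)) powr p"
      using e \<sigma>pos p by (intro exp_powr_bound) auto
    have h2': "(p / (2 * e\<^sup>2 / \<sigma>)) powr p = K1 * \<sigma> powr p"
      using e \<sigma>pos p unfolding K1_def by (simp add: powr_mult[symmetric] field_simps)
    have h3: "\<sigma> powr p \<le> S * (\<Sum>k\<in>I a. hf k) powr p"
      unfolding \<sigma>_def S_def using finI hpI p by (intro sq_sum_powr) (auto intro: less_imp_le)
    have h4: "(\<Sum>k\<in>I a. hf k) powr p \<le> dW powr p"
    proof (intro powr_mono2)
      show "0 \<le> (\<Sum>k\<in>I a. hf k)" using hpI by (intro sum_nonneg) (auto intro: less_imp_le)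
      have "(\<Sum>k\<in>I a. hf k) = tts_tau hf (g (a+d)) - tts_tau hf (g a)"
        unfolding I_def sum.shift_bounds_Suc_ivl by (simp add: tau_diff gmono)
      also have "\<dots> \<le> real (a+d) / c + Hm - real a / c"
      proof -
        have u: "tts_tau hf (g (a+d)) \<le> real (a+d) / c + Hm"
          using gr_upper[where h=hf, OF Hm Hm0, where l=l and a="a+d"] by (simp add: g_def c_def)
        have "real a \<le> tts_tau hf (g a) * c"
          using gr_ge[OF pos ns, where a=a and l=l] by (simp add: g_def c_def)
        then have "real a / c \<le> tts_tau hf (g a)" using c by (simp add: field_simps)
        then show ?thesis using u by linarith
      qed
      also have "\<dots> = dW" by (simp add: dW_def add_divide_distrib)
      finally show "(\<Sum>k\<in>I a. hf k) \<le> dW" .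
    qed (use p in auto)
    have "\<sigma> powr p \<le> S * dW powr p" using h3 mult_left_mono[OF h4 S] by linarith
    then have "K1 * \<sigma> powr p \<le> K1 * (S * dW powr p)" using K1 by (rule mult_left_mono)
    then have "measure M (A a) \<le> 2 * (K1 * (S * dW powr p))" using h1 h1' h2 h2' by linarith
    then show ?thesis by (simp add: C_def K1_def S_def mult_ac)
  qed
  define F where "F x = (\<Sum>k<x. hf (Suc k) powr p)" for x
  have Fmono: "F x \<le> F z" if "x \<le> z" for x z
  proof -
    have "F z - F x = (\<Sum>k\<in>{x..<z}. hf (Suc k) powr p)" unfolding F_def using sum_ivl_eq[OF that] by simp
    moreover have "0 \<le> (\<Sum>k\<in>{x..<z}. hf (Suc k) powr p)" by (intro sum_nonneg) simp
    ultimately show ?thesis by simp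
  qed
  have Fle: "F x \<le> (\<Sum>k. hf (Suc k) powr p)" for x
    unfolding F_def by (rule sum_le_suminf[OF sp]) auto
  define \<delta> where "\<delta> b = F (g (Suc b)) - F (g b)" for b
  have \<delta>nn: "0 \<le> \<delta> b" for b unfolding \<delta>_def using Fmono gmono by simp
  have F0: "0 \<le> F x" for x unfolding F_def by (intro sum_nonneg) simp
  have s\<delta>: "summable \<delta>"
  proof (rule summableI_nonneg_bounded[OF \<delta>nn])
    fix B
    have "sum \<delta> {..<B} = F (g B) - F (g 0)" unfolding \<delta>_def by (rule sum_lessThan_telescope)
    also have "\<dots> \<le> (\<Sum>k. hf (Suc k) powr p)" using Fle[of "g B"] F0[of "g 0"] by linarith
    finally show "sum \<delta> {..<B} \<le> (\<Sum>k. hf (Suc k) powr p)" .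
  qed
  have Ieq: "(\<Sum>k\<in>I a. hf k powr p) = (\<Sum>j<d. \<delta> (j + a))" for a
  proof -
    have "(\<Sum>k\<in>I a. hf k powr p) = F (g (a+d)) - F (g a)"
      unfolding I_def sum.shift_bounds_Suc_ivl F_def by (rule sum_ivl_eq) (simp add: gmono)
    also have "\<dots> = (\<Sum>j<d. F (g (a + Suc j)) - F (g (a + j)))"
      using sum_lessThan_telescope[of "\<lambda>j. F (g (a + j))" d] by simp
    also have "\<dots> = (\<Sum>j<d. \<delta> (j + a))" by (simp add: \<delta>_def add.commute)
    finally show ?thesis .
  qed
  have sh: "summable (\<lambda>a. \<delta> (j + a))" for j
    using summable_iff_shift[of \<delta> j] s\<delta> by (simp add: add.commute)
  have sI: "summable (\<lambda>a. C * (\<Sum>k\<in>I a. hf k powr p))"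
    unfolding Ieq
    by (intro summable_mult summable_sum) (rule sh)
  have sA: "summable (\<lambda>a. measure M (A a))"
    by (rule summable_comparison_test'[OF sI, of 0]) (simp add: bound)
  have "AE \<omega> in M. eventually (\<lambda>a. \<omega> \<in> space M - A a) sequentially"
    by (rule borel_cantelli_AE1[OF Asets]) (simp_all add: sA less_top[symmetric])
  then show ?thesis
  proof (rule AE_mp[OF _ AE_I2], intro impI)
    fix \<omega> assume "\<omega> \<in> space M" and ev: "eventually (\<lambda>a. \<omega> \<in> space M - A a) sequentially"
    show "eventually (\<lambda>a. \<bar>\<Sum>i\<in>{gr hf l a..<gr hf l (a+d)}.
            hf (Suc i) * ((if y (Suc i) \<omega> = m then 1 else 0) - 1 / real N)\<bar> < e) sequentially"
      using ev by eventually_elim (auto simp: A_def reidx[unfolded g_def] not_le)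
  qed
qed



lemma noise_all:
  fixes M :: "'w measure" and y :: "nat \<Rightarrow> 'w \<Rightarrow> nat" and hf :: "nat \<Rightarrow> real"
  assumes P: "prob_space M"
    and ymeas: "\<And>k. k \<ge> 1 \<Longrightarrow> y k \<in> measurable M (count_space UNIV)"
    and yindep: "prob_space.indep_vars M (\<lambda>_. count_space UNIV) y {1..}"
    and yunif: "\<And>k. k \<ge> 1 \<Longrightarrow> distr M (count_space UNIV) (y k) = measure_pmf (pmf_of_set {1..N})"
    and N: "N \<ge> 1"
    and adm: "admissible hf"
    and p: "p > 0" and sp: "summable (\<lambda>k. hf (Suc k) powr p)"
  shows "AE \<omega> in M. \<forall>m\<in>{1..N}. \<forall>T>0. \<forall>e>0. eventually (\<lambda>n. \<forall>k. n \<le> k \<longrightarrow>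
            tts_tau hf k \<le> tts_tau hf n + T \<longrightarrow>
            \<bar>\<Sum>i\<in>{n..<k}. hf (Suc i) * ((if y (Suc i) \<omega> = m then 1 else 0) - 1 / real N)\<bar> < e) sequentially"
proof -
  have pos: "\<And>k. k \<ge> 1 \<Longrightarrow> hf k > 0" and ns: "\<not> summable (\<lambda>k. hf (Suc k))"
    and lim: "hf \<longlonglongrightarrow> 0" using adm unfolding admissible_def by auto
  obtain Hm where Hm0: "0 < Hm" and Hm': "\<And>n. norm (hf n) \<le> Hm"
    using convergent_imp_Bseq[OF convergentI[OF lim]] by (auto elim!: BseqE)
  have Hm: "\<And>n. hf n \<le> Hm" using Hm' by (metis abs_le_D1 real_norm_def)
  have "\<forall>t::nat\<times>nat\<times>nat\<times>nat. AE \<omega> in M. fst t \<in> {1..N} \<longrightarrow>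
      eventually (\<lambda>a. \<bar>\<Sum>i\<in>{gr hf (fst (snd t)) a..<gr hf (fst (snd t)) (a + fst (snd (snd t)))}.
            hf (Suc i) * ((if y (Suc i) \<omega> = fst t then 1 else 0) - 1 / real N)\<bar> < 1 / (real (snd (snd (snd t))) + 1)) sequentially"
  proof
    fix t :: "nat\<times>nat\<times>nat\<times>nat"
    show "AE \<omega> in M. fst t \<in> {1..N} \<longrightarrow>
      eventually (\<lambda>a. \<bar>\<Sum>i\<in>{gr hf (fst (snd t)) a..<gr hf (fst (snd t)) (a + fst (snd (snd t)))}.
            hf (Suc i) * ((if y (Suc i) \<omega> = fst t then 1 else 0) - 1 / real N)\<bar> < 1 / (real (snd (snd (snd t))) + 1)) sequentially"
    proof (cases "fst t \<in> {1..N}")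
      case True
      show ?thesis
        using noise_blocks[OF P ymeas yindep yunif N True pos ns Hm less_imp_le[OF Hm0] p sp,
            of "1 / (real (snd (snd (snd t))) + 1)" "fst (snd t)" "fst (snd (snd t))"]
        by (auto elim!: AE_mp)
    next
      case False
      then show ?thesis by (intro AE_I2) auto
    qed
  qed
  then have "AE \<omega> in M. \<forall>t::nat\<times>nat\<times>nat\<times>nat. fst t \<in> {1..N} \<longrightarrow>
      eventually (\<lambda>a. \<bar>\<Sum>i\<in>{gr hf (fst (snd t)) a..<gr hf (fst (snd t)) (a + fst (snd (snd t)))}.
            hf (Suc i) * ((if y (Suc i) \<omega> = fst t then 1 else 0) - 1 / real N)\<bar> < 1 / (real (snd (snd (snd t))) + 1)) sequentially"
    by (rule AE_all_countable[THEN iffD2])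
  then show ?thesis
  proof (rule AE_mp[OF _ AE_I2], intro ballI allI impI)
    fix \<omega> m and T e :: real
    assume "\<omega> \<in> space M"
    assume A: "\<forall>t::nat\<times>nat\<times>nat\<times>nat. fst t \<in> {1..N} \<longrightarrow>
      eventually (\<lambda>a. \<bar>\<Sum>i\<in>{gr hf (fst (snd t)) a..<gr hf (fst (snd t)) (a + fst (snd (snd t)))}.
            hf (Suc i) * ((if y (Suc i) \<omega> = fst t then 1 else 0) - 1 / real N)\<bar> < 1 / (real (snd (snd (snd t))) + 1)) sequentially"
      and m: "m \<in> {1..N}" and T: "T > 0" and e: "e > 0"
    show "eventually (\<lambda>n. \<forall>k. n \<le> k \<longrightarrow>
            tts_tau hf k \<le> tts_tau hf n + T \<longrightarrow>
            \<bar>\<Sum>i\<in>{n..<k}. hf (Suc i) * ((if y (Suc i) \<omega> = m then 1 else 0) - 1 / real N)\<bar> < e) sequentially"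
    proof (rule window_lemma[OF pos ns _ _ T e])
      fix i
      have "\<bar>(if y (Suc i) \<omega> = m then 1 else 0) - 1 / real N\<bar> \<le> 1" using N by auto
      then show "\<bar>hf (Suc i) * ((if y (Suc i) \<omega> = m then 1 else 0) - 1 / real N)\<bar> \<le> hf (Suc i)"
        using pos[of "Suc i"] by (simp add: abs_mult mult_left_le)
    next
      fix l d j
      show "eventually (\<lambda>a. \<bar>\<Sum>i\<in>{gr hf l a..<gr hf l (a+d)}. hf (Suc i) * ((if y (Suc i) \<omega> = m then 1 else 0) - 1 / real N)\<bar> < 1/(real j+1)) sequentially"
        using A[rule_format, of "(m, l, d, j)"] m by simp
    qed
  qed
qed



lemma Q_var:
  fixes Q :: "nat \<Rightarrow> 'a::real_normed_vector"
  assumes step: "\<And>i. norm (Q (Suc i) - Q i) \<le> R * hs (Suc i)" and "n \<le> i"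
  shows "norm (Q i - Q n) \<le> R * (\<Sum>l\<in>{n..<i}. hs (Suc l))"
  using assms(2)
proof (induction i rule: dec_induct)
  case base then show ?case by simp
next
  case (step i)
  have "norm (Q (Suc i) - Q n) \<le> norm (Q (Suc i) - Q i) + norm (Q i - Q n)"
    by (rule order_trans[OF _ norm_triangle_ineq]) simp
  also have "\<dots> \<le> R * hs (Suc i) + R * (\<Sum>l\<in>{n..<i}. hs (Suc l))"
    using assms(1)[of i] step.IH by linarith
  also have "\<dots> = R * (\<Sum>l\<in>{n..<Suc i}. hs (Suc l))"
    using step.hyps by (simp add: algebra_simps)
  finally show ?case .
qed

lemma per_m:
  fixes Q :: "nat \<Rightarrow> 'a::euclidean_space" and gm :: "'a \<Rightarrow> 'b::real_normed_vector"
    and hs hf \<epsilon> :: "nat \<Rightarrow> real"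
  assumes QR: "\<And>i. norm (Q i) \<le> R"
    and Qs: "\<And>i. norm (Q (Suc i) - Q i) \<le> R * hs (Suc i)"
    and gc: "continuous_on UNIV gm"
    and ratio: "(\<lambda>k. hs k / hf k) \<longlonglongrightarrow> 0"
    and posf: "\<And>k. k \<ge> 1 \<Longrightarrow> hf k > 0" and poss: "\<And>k. k \<ge> 1 \<Longrightarrow> hs k > 0"
    and NZ: "\<And>T e. T > 0 \<Longrightarrow> e > 0 \<Longrightarrow> eventually (\<lambda>n. \<forall>k. n \<le> k \<longrightarrow>
        tts_tau hf k \<le> tts_tau hf n + T \<longrightarrow> \<bar>\<Sum>i\<in>{n..<k}. hf (Suc i) * \<epsilon> i\<bar> < e) sequentially"
    and eb: "\<And>i. \<bar>\<epsilon> i\<bar> \<le> 1"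
    and T: "T > 0" and e: "e > 0"
  shows "eventually (\<lambda>n. \<forall>k. n \<le> k \<longrightarrow> tts_tau hf k \<le> tts_tau hf n + T \<longrightarrow>
      norm (\<Sum>i\<in>{n..<k}. (hf (Suc i) * \<epsilon> i) *\<^sub>R gm (Q i)) < e) sequentially"
proof -
  have R0: "0 \<le> R" using QR[of 0] norm_ge_zero order_trans by blast
  define K where "K = cball (0::'a) R"
  have QK: "Q i \<in> K" for i using QR by (simp add: K_def)
  have gcK: "continuous_on K gm" using gc by (rule continuous_on_subset) simp
  have "bounded (gm ` K)" unfolding K_def
    by (rule compact_imp_bounded, rule compact_continuous_image) (use gcK K_def in auto)
  then obtain B where B: "B > 0" "\<And>q. q \<in> K \<Longrightarrow> norm (gm q) \<le> B"
    unfolding bounded_pos by auto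
  define e2 where "e2 = e / (2 * (T + 1))"
  have e2: "e2 > 0" "T * e2 < e / 2" using e T by (auto simp: e2_def field_simps)
  have "uniformly_continuous_on K gm" unfolding K_def
    by (rule compact_uniformly_continuous) (use gcK K_def in auto)
  then obtain \<delta> where \<delta>: "\<delta> > 0" and uc: "\<And>x x'. x \<in> K \<Longrightarrow> x' \<in> K \<Longrightarrow> dist x' x < \<delta> \<Longrightarrow> dist (gm x') (gm x) < e2"
    unfolding uniformly_continuous_on_def using e2(1) by metis
  define r where "r = \<delta> / ((R + 1) * (T + 1))"
  have r: "r > 0" using \<delta> R0 T by (simp add: r_def)
  have rRT: "R * (r * T) < \<delta>"
  proof -
    have "R * (r * T) \<le> (R + 1) * (r * T)" using r T by (simp add: mult_right_mono)
    also have "\<dots> < (R + 1) * (r * (T + 1))" using r R0 by (simp add: mult_strict_left_mono)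
    also have "\<dots> = r * ((R + 1) * (T + 1))" by (simp add: algebra_simps)
    also have "\<dots> = \<delta>" 
    proof -
      have "R + 1 \<noteq> 0" "T + 1 \<noteq> 0" using R0 T by linarith+
      then show ?thesis unfolding r_def by simp
    qed
    finally show ?thesis .
  qed
  have "eventually (\<lambda>k. hs k / hf k < r) sequentially" using order_tendstoD(2)[OF ratio r] .
  then obtain K0 where K0: "\<And>k. k \<ge> K0 \<Longrightarrow> hs k / hf k < r" unfolding eventually_sequentially by auto
  have hsr: "hs (Suc l) \<le> r * hf (Suc l)" if "l \<ge> K0" for l
  proof -
    have "hs (Suc l) / hf (Suc l) < r" using K0 that by simp
    then show ?thesis using posf[of "Suc l"] by (simp add: divide_less_eq less_imp_le)
  qed
  have ev: "eventually (\<lambda>n. K0 \<le> n \<and> (\<forall>k. n \<le> k \<longrightarrow>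
        tts_tau hf k \<le> tts_tau hf n + T \<longrightarrow> \<bar>\<Sum>i\<in>{n..<k}. hf (Suc i) * \<epsilon> i\<bar> < e / (2 * B))) sequentially"
    using eventually_conj[OF eventually_ge_at_top[of K0] NZ[OF T, of "e / (2 * B)"]] e B(1)
    by simp
  show ?thesis
  proof (rule eventually_mono[OF ev], intro allI impI)
    fix n k assume H: "K0 \<le> n \<and> (\<forall>k. n \<le> k \<longrightarrow>
        tts_tau hf k \<le> tts_tau hf n + T \<longrightarrow> \<bar>\<Sum>i\<in>{n..<k}. hf (Suc i) * \<epsilon> i\<bar> < e / (2 * B))"
      and nk: "n \<le> k" and kw: "tts_tau hf k \<le> tts_tau hf n + T"
    have S: "\<bar>\<Sum>i\<in>{n..<k}. hf (Suc i) * \<epsilon> i\<bar> < e / (2 * B)" using H nk kw by blast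
    have sumhf: "(\<Sum>i\<in>{n..<k}. hf (Suc i)) \<le> T" using tau_diff[OF nk, of hf] kw by simp
    have hfnn: "0 \<le> hf (Suc i)" for i using posf[of "Suc i"] by simp
    have hsnn: "0 \<le> hs (Suc i)" for i using poss[of "Suc i"] by simp
    have sumhs: "(\<Sum>i\<in>{n..<k}. hs (Suc i)) \<le> r * T"
    proof -
      have "(\<Sum>i\<in>{n..<k}. hs (Suc i)) \<le> (\<Sum>i\<in>{n..<k}. r * hf (Suc i))"
        using H by (intro sum_mono hsr) auto
      also have "\<dots> \<le> r * T" using sumhf r by (simp add: sum_distrib_left[symmetric] mult_left_mono)
      finally show ?thesis .
    qed
    have close: "norm (gm (Q i) - gm (Q n)) < e2" if i: "i \<in> {n..<k}" for i
    proof -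
      have "norm (Q i - Q n) \<le> R * (\<Sum>l\<in>{n..<i}. hs (Suc l))" using Q_var[where Q=Q and R=R and hs=hs, OF Qs] i by simp
      also have "(\<Sum>l\<in>{n..<i}. hs (Suc l)) \<le> (\<Sum>l\<in>{n..<k}. hs (Suc l))"
        using i by (intro sum_mono2) (auto simp: hsnn)
      then have "R * (\<Sum>l\<in>{n..<i}. hs (Suc l)) \<le> R * (r * T)" using sumhs R0
        by (meson mult_left_mono order_trans)
      finally have "norm (Q i - Q n) < \<delta>" using rRT by linarith
      then show ?thesis using uc[OF QK QK, of n i] by (simp add: dist_norm norm_minus_commute)
    qed
    define c where "c i = hf (Suc i) * \<epsilon> i" for i
    have cb: "\<bar>c i\<bar> \<le> hf (Suc i)" for i
      using eb[of i] hfnn[of i] by (simp add: c_def abs_mult mult_left_le)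
    have decomp: "(\<Sum>i\<in>{n..<k}. c i *\<^sub>R gm (Q i)) =
        (\<Sum>i\<in>{n..<k}. c i) *\<^sub>R gm (Q n) + (\<Sum>i\<in>{n..<k}. c i *\<^sub>R (gm (Q i) - gm (Q n)))"
      by (simp add: scaleR_diff_right sum_subtractf scaleR_sum_left)
    have "norm (\<Sum>i\<in>{n..<k}. c i *\<^sub>R gm (Q i)) \<le>
        norm ((\<Sum>i\<in>{n..<k}. c i) *\<^sub>R gm (Q n)) + norm (\<Sum>i\<in>{n..<k}. c i *\<^sub>R (gm (Q i) - gm (Q n)))"
      unfolding decomp by (rule norm_triangle_ineq)
    also have "norm ((\<Sum>i\<in>{n..<k}. c i) *\<^sub>R gm (Q n)) \<le> (e / (2 * B)) * B"
    proof -
      have "norm ((\<Sum>i\<in>{n..<k}. c i) *\<^sub>R gm (Q n)) = \<bar>\<Sum>i\<in>{n..<k}. c i\<bar> * norm (gm (Q n))" by simp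
      also have "\<dots> \<le> (e / (2 * B)) * B"
        using S B QK[of n] by (intro mult_mono) (auto simp: c_def less_imp_le)
      finally show ?thesis .
    qed
    also have "norm (\<Sum>i\<in>{n..<k}. c i *\<^sub>R (gm (Q i) - gm (Q n))) \<le> (\<Sum>i\<in>{n..<k}. hf (Suc i) * e2)"
    proof (rule order_trans[OF norm_sum], rule sum_mono)
      fix i assume i: "i \<in> {n..<k}"
      have "norm (c i *\<^sub>R (gm (Q i) - gm (Q n))) = \<bar>c i\<bar> * norm (gm (Q i) - gm (Q n))" by simp
      also have "\<dots> \<le> hf (Suc i) * e2" using cb[of i] close[OF i] hfnn[of i]
        by (intro mult_mono) auto
      finally show "norm (c i *\<^sub>R (gm (Q i) - gm (Q n))) \<le> hf (Suc i) * e2" .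
    qed
    also have "(\<Sum>i\<in>{n..<k}. hf (Suc i) * e2) \<le> T * e2"
      using sumhf e2(1) by (simp add: sum_distrib_right[symmetric] mult_right_mono)
    finally have "norm (\<Sum>i\<in>{n..<k}. c i *\<^sub>R gm (Q i)) < e"
      using e2(2) B(1) by (simp add: field_simps) linarith?
    then show "norm (\<Sum>i\<in>{n..<k}. (hf (Suc i) * \<epsilon> i) *\<^sub>R gm (Q i)) < e" by (simp add: c_def)
  qed
qed



lemma acc_graph:
  fixes u :: "nat \<Rightarrow> 'x::metric_space" and \<phi> :: "'x \<Rightarrow> 'y::metric_space"
  assumes uS: "\<And>k. u k \<in> S" and cS: "closed S" and c: "continuous_on UNIV \<phi>"
  shows "acc_pts (\<lambda>k. (u k, \<phi> (u k))) \<subseteq> {(x, v). x \<in> S \<and> v = \<phi> x}"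
proof
  fix z assume "z \<in> acc_pts (\<lambda>k. (u k, \<phi> (u k)))"
  then obtain r where r: "strict_mono r" and lim: "((\<lambda>k. (u k, \<phi> (u k))) \<circ> r) \<longlonglongrightarrow> z"
    unfolding acc_pts_def by blast
  obtain x v where z: "z = (x, v)" by (cases z)
  have l1: "(\<lambda>k. u (r k)) \<longlonglongrightarrow> x" using tendsto_fst[OF lim] by (simp add: o_def z)
  have l2: "(\<lambda>k. \<phi> (u (r k))) \<longlonglongrightarrow> v" using tendsto_snd[OF lim] by (simp add: o_def z)
  have xS: "x \<in> S" using closed_sequentially[OF cS _ l1] uS by auto
  have "(\<lambda>k. \<phi> (u (r k))) \<longlonglongrightarrow> \<phi> x" using continuous_on_tendsto_compose[OF c l1] by simp
  then have "v = \<phi> x" using l2 LIMSEQ_unique by blast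
  then show "z \<in> {(x, v). x \<in> S \<and> v = \<phi> x}" using z xS by simp
qed

lemma HB_C_closed: "closed (HB_C Tc :: (('a::real_inner \<times> 'a \<times> real) \<times> 'a) set)"
proof -
  have "HB_C Tc = {x :: ('a \<times> 'a \<times> real) \<times> 'a. (snd x \<bullet> fst (snd (fst x)) \<le> 0 \<and> Tc \<le> snd (snd (fst x)))
      \<or> snd (snd (fst x)) \<le> Tc}"
    by (auto simp: HB_C_def)
  also have "closed \<dots>"
    by (intro closed_Collect_disj closed_Collect_conj closed_Collect_le continuous_intros)
  finally show ?thesis .
qed

lemma HB_D_closed: "closed (HB_D Tc :: (('a::real_inner \<times> 'a \<times> real) \<times> 'a) set)"
proof -
  have "HB_D Tc = {x :: ('a \<times> 'a \<times> real) \<times> 'a. 0 \<le> snd x \<bullet> fst (snd (fst x)) \<and> Tc \<le> snd (snd (fst x))}"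
    by (auto simp: HB_D_def)
  also have "closed \<dots>"
    by (intro closed_Collect_conj closed_Collect_le continuous_intros)
  finally show ?thesis .
qed

lemma F_HB_eq: "F_HB \<kappa> Tc xs \<xi> = (fst (snd xs), - (\<kappa> *\<^sub>R fst (snd xs)) - \<xi>, min 1 (2 - snd (snd xs) / Tc))"
  by (cases xs) (auto simp: F_HB_def)

definition HBF :: "real \<Rightarrow> real \<Rightarrow> ('a \<Rightarrow> 'a) \<Rightarrow> ('a::real_normed_vector \<times> 'a \<times> real) \<times> 'a
     \<Rightarrow> (('a \<times> 'a \<times> real) \<times> 'a)" where
  "HBF \<kappa> Tc g x = (F_HB \<kappa> Tc (fst x) (snd x), - snd x + g (fst (fst x)))"

lemma HB_F1_eq: "HB_F1 \<kappa> Tc g x = {HBF \<kappa> Tc g x}"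
  by (cases x) (simp add: HB_F1_def HBF_def)

lemma HBF_cont:
  assumes "continuous_on UNIV g" "Tc > 0"
  shows "continuous_on UNIV (HBF \<kappa> Tc g)"
  unfolding HBF_def F_HB_eq
  by (intro continuous_intros continuous_on_compose2[OF assms(1)]) (use assms(2) in auto)

definition HBG :: "('a::real_normed_vector \<times> 'a \<times> real) \<times> 'a \<Rightarrow> ('a \<times> 'a \<times> real) \<times> 'a" where
  "HBG x = (G_HB (fst x), snd x)"

lemma G_HB_eq: "G_HB xs = (fst xs, 0, 0)" by (cases xs) (simp add: G_HB_def)

lemma HB_G_eq: "HB_G x = {HBG x}" by (cases x) (simp add: HB_G_def HBG_def)

lemma HBG_cont: "continuous_on UNIV HBG"
  unfolding HBG_def G_HB_eq by (intro continuous_intros)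

lemma chain_q:
  fixes X0 :: "nat \<Rightarrow> nat \<Rightarrow> ('a \<times> 'b) \<times> 'c"
  assumes st: "\<And>j. j1 \<le> j \<Longrightarrow> j < j2 \<Longrightarrow> fst (fst (X0 k (Suc j))) = fst (fst (X0 k j))" and "j1 \<le> j2"
  shows "fst (fst (X0 k j2)) = fst (fst (X0 k j1))"
  using assms(2) st
proof (induction j2 rule: dec_induct)
  case base then show ?case by simp
next
  case (step j) then show ?case by simp
qed



lemma noise_decomp:
  fixes gi :: "nat \<Rightarrow> 'a \<Rightarrow> 'b::real_vector"
  assumes gavg: "g q = (1 / real N) *\<^sub>R (\<Sum>m\<in>{1..N}. gi m q)" and yv: "yv \<in> {1..N}"
  shows "gi yv q - g q = (\<Sum>m\<in>{1..N}. ((if yv = m then 1 else 0) - 1 / real N) *\<^sub>R gi m q)"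
proof -
  have "(\<Sum>m\<in>{1..N}. ((if yv = m then 1 else 0) - 1 / real N) *\<^sub>R gi m q)
      = (\<Sum>m\<in>{1..N}. (if yv = m then gi m q else 0)) - (\<Sum>m\<in>{1..N}. (1 / real N) *\<^sub>R gi m q)"
  proof -
    have "((if yv = m then 1 else 0) - 1 / real N) *\<^sub>R gi m q
        = (if yv = m then gi m q else 0) - (1 / real N) *\<^sub>R gi m q" for m
      by (simp add: scaleR_left_diff_distrib)
    then show ?thesis by (simp add: sum_subtractf)
  qed
  also have "(\<Sum>m\<in>{1..N}. (if yv = m then gi m q else 0)) = gi yv q" using yv by simp
  also have "(\<Sum>m\<in>{1..N}. (1 / real N) *\<^sub>R gi m q) = g q" by (simp add: gavg scaleR_sum_right)
  finally show ?thesis by simp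
qed

lemma main_det:
  fixes g :: "'a::euclidean_space \<Rightarrow> 'a" and gi :: "nat \<Rightarrow> 'a \<Rightarrow> 'a"
    and E0 :: "(nat \<times> nat) set" and X0 :: "nat \<Rightarrow> nat \<Rightarrow> ('a \<times> 'a \<times> real) \<times> 'a" and yy :: "nat \<Rightarrow> nat"
  assumes gavg: "\<And>q. g q = (1 / real N) *\<^sub>R (\<Sum>m\<in>{1..N}. gi m q)"
    and gcont: "continuous_on UNIV g"
    and gconti: "\<And>i. i \<in> {1..N} \<Longrightarrow> continuous_on UNIV (gi i)"
    and N: "N \<ge> 1" and Tc: "Tc > 0"
    and steps: "two_ts_admissible hs hf"
    and H: "hybrid_seq_domain E0" and cpl: "hs_complete E0"
    and flow: "\<And>k j. (k, j) \<in> E0 \<Longrightarrow> (Suc k, j) \<in> E0 \<Longrightarrow>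
           X0 k j \<in> HB_C Tc \<and>
           fst (X0 (Suc k) j) = fst (X0 k j) + hs (Suc k) *\<^sub>R F_HB \<kappa> Tc (fst (X0 k j)) (snd (X0 k j)) \<and>
           snd (X0 (Suc k) j) = snd (X0 k j) + hf (Suc k) *\<^sub>R (gi (yy (Suc k)) (fst (fst (X0 k j))) - snd (X0 k j))"
    and jump: "\<And>k j. (k, j) \<in> E0 \<Longrightarrow> (k, Suc j) \<in> E0 \<Longrightarrow>
           X0 k j \<in> HB_D Tc \<and> fst (X0 k (Suc j)) = G_HB (fst (X0 k j)) \<and> snd (X0 k (Suc j)) = snd (X0 k j)"
    and bdd: "bounded ((\<lambda>(k, j). X0 k j) ` E0)"
    and yy: "\<And>i. yy (Suc i) \<in> {1..N}"
    and NZ: "\<And>m T e. m \<in> {1..N} \<Longrightarrow> T > 0 \<Longrightarrow> e > 0 \<Longrightarrow> eventually (\<lambda>n. \<forall>k. n \<le> k \<longrightarrow>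
            tts_tau hf k \<le> tts_tau hf n + T \<longrightarrow>
            \<bar>\<Sum>i\<in>{n..<k}. hf (Suc i) * ((if yy (Suc i) = m then 1 else 0) - 1 / real N)\<bar> < e) sequentially"
  shows "two_ts_asym_sim (HB_C Tc) (HB_F1 \<kappa> Tc g) (HB_D Tc) HB_G E0 X0 hs hf"
proof -
  define Bs where "Bs = (\<lambda>(k, j). X0 k j) ` E0"
  obtain R where R: "\<And>z. z \<in> Bs \<Longrightarrow> norm z \<le> R" using bdd unfolding Bs_def bounded_iff by blast
  have inBs: "(k, j) \<in> E0 \<Longrightarrow> X0 k j \<in> Bs" for k j by (force simp: Bs_def)
  have adm_s: "admissible hs" and adm_f: "admissible hf" and ratio: "(\<lambda>k. hs k / hf k) \<longlonglongrightarrow> 0"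
    using steps unfolding two_ts_admissible_def by auto
  have poss: "\<And>k. k \<ge> 1 \<Longrightarrow> hs k > 0" using adm_s unfolding admissible_def by auto
  have posf: "\<And>k. k \<ge> 1 \<Longrightarrow> hf k > 0" and nsf: "\<not> summable (\<lambda>k. hf (Suc k))"
    using adm_f unfolding admissible_def by auto
  have kcase: "\<exists>f :: nat \<Rightarrow> ('a \<times> 'a \<times> real) \<times> 'a. bounded (range f) \<and>
           acc_pts (\<lambda>k. (X0 k (jbar E0 k), f k)) \<subseteq> {(x, v). x \<in> HB_C Tc \<and> v \<in> HB_F1 \<kappa> Tc g x} \<and>
           tts_interp_cond hs (\<lambda>k j. fst (X0 k j)) (jbar E0) (\<lambda>k. fst (f k)) \<and>
           tts_interp_cond hf (\<lambda>k j. snd (X0 k j)) (jbar E0) (\<lambda>k. snd (f k))"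
    if nb: "\<not> bdd_above (fst ` E0)"
  proof -
    define jb where "jb = jbar E0"
    have dom: "(k, jb k) \<in> E0 \<and> (Suc k, jb k) \<in> E0" for k
      using hsd_k_all[OF H nb, of k] jbar_mem[OF H] unfolding jb_def by blast
    define \<Phi> where "\<Phi> k = X0 k (jb k)" for k
    define f where "f k = HBF \<kappa> Tc g (\<Phi> k)" for k
    have \<Phi>B: "\<Phi> k \<in> Bs" for k using dom inBs \<Phi>_def by auto
    have \<Phi>C: "\<Phi> k \<in> HB_C Tc" for k
      using flow[OF conjunct1[OF dom[of k]] conjunct2[OF dom[of k]]] unfolding \<Phi>_def by simp
    have fl: "fst (X0 (Suc k) (jb k)) = fst (\<Phi> k) + hs (Suc k) *\<^sub>R F_HB \<kappa> Tc (fst (\<Phi> k)) (snd (\<Phi> k))"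
      "snd (X0 (Suc k) (jb k)) = snd (\<Phi> k) + hf (Suc k) *\<^sub>R (gi (yy (Suc k)) (fst (fst (\<Phi> k))) - snd (\<Phi> k))" for k
      using flow[OF conjunct1[OF dom] conjunct2[OF dom]] unfolding \<Phi>_def by auto
    have cF: "continuous_on UNIV (HBF \<kappa> Tc g)" by (rule HBF_cont[OF gcont Tc])
    have bf: "bounded (range f)"
    proof -
      have "compact (HBF \<kappa> Tc g ` closure Bs)"
        using bdd cF unfolding Bs_def[symmetric]
        by (intro compact_continuous_image) (auto simp: compact_closure intro: continuous_on_subset)
      then have "bounded (HBF \<kappa> Tc g ` closure Bs)" by (rule compact_imp_bounded)
      moreover have "range f \<subseteq> HBF \<kappa> Tc g ` closure Bs"
        using \<Phi>B closure_subset by (auto simp: f_def)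
      ultimately show ?thesis by (rule bounded_subset)
    qed
    have acc: "acc_pts (\<lambda>k. (X0 k (jbar E0 k), f k)) \<subseteq> {(x, v). x \<in> HB_C Tc \<and> v \<in> HB_F1 \<kappa> Tc g x}"
    proof -
      have "acc_pts (\<lambda>k. (\<Phi> k, HBF \<kappa> Tc g (\<Phi> k))) \<subseteq> {(x, v). x \<in> HB_C Tc \<and> v = HBF \<kappa> Tc g x}"
        by (rule acc_graph[OF \<Phi>C HB_C_closed cF])
      then show ?thesis by (auto simp: f_def \<Phi>_def jb_def HB_F1_eq)
    qed
    have slow: "tts_interp_cond hs (\<lambda>k j. fst (X0 k j)) (jbar E0) (\<lambda>k. fst (f k))"
      unfolding tts_interp_cond_def
    proof (intro allI impI always_eventually ballI)
      fix T \<epsilon> :: real and n k assume "\<epsilon> > 0"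
      have z: "hs (Suc i) *\<^sub>R ((1 / hs (Suc i)) *\<^sub>R (fst (X0 (Suc i) (jbar E0 i)) - fst (X0 i (jbar E0 i))) - fst (f i)) = 0" for i
        using poss[of "Suc i"] fl(1)[of i] by (simp add: f_def HBF_def \<Phi>_def jb_def)
      show "norm (\<Sum>i\<in>{n..<k}. hs (Suc i) *\<^sub>R ((1 / hs (Suc i)) *\<^sub>R (fst (X0 (Suc i) (jbar E0 i)) - fst (X0 i (jbar E0 i))) - fst (f i))) < \<epsilon>"
        using \<open>\<epsilon> > 0\<close> by (simp only: z sum.neutral_const norm_zero)
    qed
    define Q where "Q k = fst (fst (\<Phi> k))" for k
    have QR: "norm (Q k) \<le> R" for k
    proof -
      have "norm (Q k) \<le> norm (fst (\<Phi> k))" unfolding Q_def using norm_fst_le[of "fst (fst (\<Phi> k))" "snd (fst (\<Phi> k))"] by simp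
      also have "\<dots> \<le> norm (\<Phi> k)" using norm_fst_le[of "fst (\<Phi> k)" "snd (\<Phi> k)"] by simp
      also have "\<dots> \<le> R" using R \<Phi>B by blast
      finally show ?thesis .
    qed
    have Qs: "norm (Q (Suc i) - Q i) \<le> R * hs (Suc i)" for i
    proof -
      have j12: "jb i \<le> jb (Suc i)" using hsd_mono[OF H conjunct2[OF dom[of i]] conjunct2[OF dom[of "Suc i"]]] by simp
      have inS: "(Suc i, j) \<in> E0" if "jb i \<le> j" "j \<le> jb (Suc i)" for j
        using hsd_interval[OF H conjunct2[OF dom[of i]] conjunct1[OF dom[of "Suc i"]] that] .
      have "fst (fst (X0 (Suc i) (jb (Suc i)))) = fst (fst (X0 (Suc i) (jb i)))"
      proof (rule chain_q[OF _ j12])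
        fix j assume "jb i \<le> j" "j < jb (Suc i)"
        then have "(Suc i, j) \<in> E0" "(Suc i, Suc j) \<in> E0" using inS by auto
        then show "fst (fst (X0 (Suc i) (Suc j))) = fst (fst (X0 (Suc i) j))"
          using jump by (simp add: G_HB_eq)
      qed
      also have "\<dots> = Q i + hs (Suc i) *\<^sub>R fst (snd (fst (\<Phi> i)))"
        using fl(1)[of i] by (simp add: Q_def F_HB_eq)
      finally have eq: "Q (Suc i) - Q i = hs (Suc i) *\<^sub>R fst (snd (fst (\<Phi> i)))" by (simp add: Q_def \<Phi>_def)
      have "norm (fst (snd (fst (\<Phi> i)))) \<le> norm (snd (fst (\<Phi> i)))"
        using norm_fst_le[of "fst (snd (fst (\<Phi> i)))" "snd (snd (fst (\<Phi> i)))"] by simp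
      also have "\<dots> \<le> norm (fst (\<Phi> i))" using norm_snd_le[of "snd (fst (\<Phi> i))" "fst (fst (\<Phi> i))"] by simp
      also have "\<dots> \<le> norm (\<Phi> i)" using norm_fst_le[of "fst (\<Phi> i)" "snd (\<Phi> i)"] by simp
      also have "\<dots> \<le> R" using R \<Phi>B by blast
      finally have pR: "norm (fst (snd (fst (\<Phi> i)))) \<le> R" .
      have "norm (Q (Suc i) - Q i) = hs (Suc i) * norm (fst (snd (fst (\<Phi> i))))"
        unfolding eq using poss[of "Suc i"] by simp
      also have "\<dots> \<le> hs (Suc i) * R" using pR poss[of "Suc i"] by (intro mult_left_mono) auto
      finally show ?thesis by (simp add: mult.commute)
    qed
    define \<epsilon> where "\<epsilon> m i = (if yy (Suc i) = m then 1 else 0) - 1 / real N" for m i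
    have trm: "hf (Suc i) *\<^sub>R ((1 / hf (Suc i)) *\<^sub>R (snd (X0 (Suc i) (jbar E0 i)) - snd (X0 i (jbar E0 i))) - snd (f i))
        = (\<Sum>m\<in>{1..N}. (hf (Suc i) * \<epsilon> m i) *\<^sub>R gi m (Q i))" for i
    proof -
      have "hf (Suc i) *\<^sub>R ((1 / hf (Suc i)) *\<^sub>R (snd (X0 (Suc i) (jbar E0 i)) - snd (X0 i (jbar E0 i))) - snd (f i))
          = hf (Suc i) *\<^sub>R (gi (yy (Suc i)) (Q i) - g (Q i))"
        using posf[of "Suc i"] fl(2)[of i] by (simp add: f_def HBF_def \<Phi>_def jb_def Q_def algebra_simps)
      also have "\<dots> = hf (Suc i) *\<^sub>R (\<Sum>m\<in>{1..N}. \<epsilon> m i *\<^sub>R gi m (Q i))"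
        unfolding \<epsilon>_def using noise_decomp[where g=g and gi=gi and N=N, OF gavg[of "Q i"] yy[of i]] by simp
      also have "\<dots> = (\<Sum>m\<in>{1..N}. (hf (Suc i) * \<epsilon> m i) *\<^sub>R gi m (Q i))"
        by (simp add: scaleR_sum_right)
      finally show ?thesis .
    qed
    have fast: "tts_interp_cond hf (\<lambda>k j. snd (X0 k j)) (jbar E0) (\<lambda>k. snd (f k))"
      unfolding tts_interp_cond_def
    proof (intro allI impI)
      fix T e :: real assume T: "T > 0" and e: "e > 0"
      have eN: "e / real N > 0" using e N by simp
      have "eventually (\<lambda>n. \<forall>m\<in>{1..N}. \<forall>k. n \<le> k \<longrightarrow> tts_tau hf k \<le> tts_tau hf n + T \<longrightarrow>
          norm (\<Sum>i\<in>{n..<k}. (hf (Suc i) * \<epsilon> m i) *\<^sub>R gi m (Q i)) < e / real N) sequentially"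
      proof (intro eventually_ball_finite ballI)
        fix m assume m: "m \<in> {1..N}"
        show "eventually (\<lambda>n. \<forall>k. n \<le> k \<longrightarrow> tts_tau hf k \<le> tts_tau hf n + T \<longrightarrow>
          norm (\<Sum>i\<in>{n..<k}. (hf (Suc i) * \<epsilon> m i) *\<^sub>R gi m (Q i)) < e / real N) sequentially"
        proof (rule per_m[OF QR Qs gconti[OF m] ratio posf poss _ _ T eN])
          fix T' e' :: real assume "T' > 0" "e' > 0"
          then show "eventually (\<lambda>n. \<forall>k. n \<le> k \<longrightarrow> tts_tau hf k \<le> tts_tau hf n + T' \<longrightarrow>
              \<bar>\<Sum>i\<in>{n..<k}. hf (Suc i) * \<epsilon> m i\<bar> < e') sequentially"
            using NZ[OF m] unfolding \<epsilon>_def by blast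
        next
          fix i show "\<bar>\<epsilon> m i\<bar> \<le> 1" using N by (auto simp: \<epsilon>_def)
        qed simp_all
      qed simp
      then show "eventually (\<lambda>n. \<forall>k\<in>tts_I hf n T. norm (\<Sum>i\<in>{n..<k}. hf (Suc i) *\<^sub>R
           ((1 / hf (Suc i)) *\<^sub>R (snd (X0 (Suc i) (jbar E0 i)) - snd (X0 i (jbar E0 i))) - snd (f i))) < e) sequentially"
      proof (rule eventually_mono, intro ballI)
        fix n k
        assume A: "\<forall>m\<in>{1..N}. \<forall>k. n \<le> k \<longrightarrow> tts_tau hf k \<le> tts_tau hf n + T \<longrightarrow>
          norm (\<Sum>i\<in>{n..<k}. (hf (Suc i) * \<epsilon> m i) *\<^sub>R gi m (Q i)) < e / real N"
          and k: "k \<in> tts_I hf n T"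
        have w: "n \<le> k \<and> tts_tau hf k \<le> tts_tau hf n + T" by (rule tts_I_window[OF posf nsf T k])
        have "(\<Sum>i\<in>{n..<k}. hf (Suc i) *\<^sub>R
           ((1 / hf (Suc i)) *\<^sub>R (snd (X0 (Suc i) (jbar E0 i)) - snd (X0 i (jbar E0 i))) - snd (f i)))
          = (\<Sum>m\<in>{1..N}. \<Sum>i\<in>{n..<k}. (hf (Suc i) * \<epsilon> m i) *\<^sub>R gi m (Q i))"
          unfolding trm by (rule sum.swap)
        also have "norm \<dots> \<le> (\<Sum>m\<in>{1..N}. norm (\<Sum>i\<in>{n..<k}. (hf (Suc i) * \<epsilon> m i) *\<^sub>R gi m (Q i)))"
          by (rule norm_sum)
        also have "\<dots> < (\<Sum>m\<in>{1..N}. e / real N)"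
          using A w N by (intro sum_strict_mono) auto
        also have "\<dots> = e" using N by simp
        finally show "norm (\<Sum>i\<in>{n..<k}. hf (Suc i) *\<^sub>R
           ((1 / hf (Suc i)) *\<^sub>R (snd (X0 (Suc i) (jbar E0 i)) - snd (X0 i (jbar E0 i))) - snd (f i))) < e" .
      qed
    qed
    show ?thesis using bf acc slow fast by blast
  qed
  have jcase: "acc_pts (\<lambda>j. (X0 (kbar E0 j) j, X0 (kbar E0 j) (Suc j))) \<subseteq> {(x, x'). x \<in> HB_D Tc \<and> x' \<in> HB_G x}"
    if nb: "\<not> bdd_above (snd ` E0)"
  proof -
    have dom: "(kbar E0 j, j) \<in> E0 \<and> (kbar E0 j, Suc j) \<in> E0" for j
      using hsd_j_all[OF H nb, of j] kbar_mem[OF H] by blast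
    define u where "u j = X0 (kbar E0 j) j" for j
    have uD: "u j \<in> HB_D Tc" for j
      using jump[OF conjunct1[OF dom[of j]] conjunct2[OF dom[of j]]] unfolding u_def by simp
    have uG: "X0 (kbar E0 j) (Suc j) = HBG (u j)" for j
      using jump[OF conjunct1[OF dom[of j]] conjunct2[OF dom[of j]]] unfolding u_def HBG_def
      by (simp add: prod_eq_iff)
    have "acc_pts (\<lambda>j. (u j, HBG (u j))) \<subseteq> {(x, v). x \<in> HB_D Tc \<and> v = HBG x}"
      by (rule acc_graph[OF uD HB_D_closed HBG_cont])
    then show ?thesis by (auto simp: uG u_def HB_G_eq)
  qed
  show ?thesis unfolding two_ts_asym_sim_def
    using H cpl bdd steps kcase jcase by blast
qed



lemma gavg_lemma:
  fixes \<Psi> :: "'a::euclidean_space \<Rightarrow> real" and g :: "'a \<Rightarrow> 'a"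
  assumes grad: "\<And>q. GDERIV \<Psi> q :> g q"
    and N: "N \<ge> 1"
    and avg: "\<And>q. \<Psi> q = (\<Sum>i=1..N. \<Psi>i i q) / real N"
    and gradi: "\<And>i q. i \<in> {1..N} \<Longrightarrow> GDERIV (\<Psi>i i) q :> gi i q"
  shows "g q = (1 / real N) *\<^sub>R (\<Sum>m\<in>{1..N}. gi m q)"
proof -
  define G where "G = (1 / real N) *\<^sub>R (\<Sum>m\<in>{1..N}. gi m q)"
  have d1: "(\<Psi> has_derivative (\<lambda>h. h \<bullet> g q)) (at q)" using grad[of q] by (simp add: gderiv_def)
  have di: "(\<Psi>i i has_derivative (\<lambda>h. h \<bullet> gi i q)) (at q)" if "i \<in> {1..N}" for i
    using gradi[OF that, of q] by (simp add: gderiv_def)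
  have "((\<lambda>x. (\<Sum>i=1..N. \<Psi>i i x) / real N) has_derivative (\<lambda>h. (\<Sum>i=1..N. h \<bullet> gi i q) / real N)) (at q)"
  proof -
    have s: "((\<lambda>x. \<Sum>i=1..N. \<Psi>i i x) has_derivative (\<lambda>h. \<Sum>i=1..N. h \<bullet> gi i q)) (at q)"
      by (rule has_derivative_sum) (rule di)
    from has_derivative_mult_left[OF s, of "1 / real N"] show ?thesis by simp
  qed
  moreover have "(\<lambda>x. (\<Sum>i=1..N. \<Psi>i i x) / real N) = \<Psi>" using avg by (simp add: fun_eq_iff)
  ultimately have d2: "(\<Psi> has_derivative (\<lambda>h. (\<Sum>i=1..N. h \<bullet> gi i q) / real N)) (at q)" by simp
  have eq: "(\<lambda>h. h \<bullet> g q) = (\<lambda>h. (\<Sum>i=1..N. h \<bullet> gi i q) / real N)"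
    by (rule has_derivative_unique[OF d1 d2])
  have "(\<Sum>i=1..N. h \<bullet> gi i q) / real N = h \<bullet> G" for h
    by (simp add: G_def inner_sum_right)
  then have "h \<bullet> g q = h \<bullet> G" for h using fun_cong[OF eq, of h] by simp
  then have "(g q - G) \<bullet> (g q - G) = 0" by (simp add: inner_diff_right)
  then show ?thesis unfolding G_def[symmetric] by simp
qed

theorem lemma3:
  fixes \<Psi> :: "'a::euclidean_space \<Rightarrow> real" and g :: "'a \<Rightarrow> 'a"
    and N :: nat and \<Psi>i :: "nat \<Rightarrow> 'a \<Rightarrow> real" and gi :: "nat \<Rightarrow> 'a \<Rightarrow> 'a"
    and \<kappa> Tc \<rho> :: real and hs hf :: "nat \<Rightarrow> real"
    and M :: "'w measure" and y :: "nat \<Rightarrow> 'w \<Rightarrow> nat"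
    and E :: "'w \<Rightarrow> (nat \<times> nat) set" and X :: "'w \<Rightarrow> nat \<Rightarrow> nat \<Rightarrow> ('a \<times> 'a \<times> real) \<times> 'a"
    and \<Omega>h :: "'w set"
  assumes grad: "\<And>q. GDERIV \<Psi> q :> g q" and gcont: "continuous_on UNIV g"
    and sublevel: "\<And>c. compact {q. \<Psi> q \<le> c}"
    and lip: "\<exists>L. L-lipschitz_on UNIV g"
    and crit: "{q. \<forall>x. \<Psi> q \<le> \<Psi> x} = {q. g q = 0}"
    and N: "N \<ge> 1"
    and avg: "\<And>q. \<Psi> q = (\<Sum>i=1..N. \<Psi>i i q) / real N"
    and gradi: "\<And>i q. i \<in> {1..N} \<Longrightarrow> GDERIV (\<Psi>i i) q :> gi i q"
    and gconti: "\<And>i. i \<in> {1..N} \<Longrightarrow> continuous_on UNIV (gi i)"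
    and kT: "\<kappa> > 0" "Tc > 0"
    and steps: "two_ts_admissible hs hf"
    and rho: "\<rho> \<ge> 1" "summable (\<lambda>k. hf (Suc k) powr (1 + \<rho>))"
    and P: "prob_space M"
    and ymeas: "\<And>k. k \<ge> 1 \<Longrightarrow> y k \<in> measurable M (count_space UNIV)"
    and yindep: "prob_space.indep_vars M (\<lambda>_. count_space UNIV) y {1..}"
    and yunif: "\<And>k. k \<ge> 1 \<Longrightarrow> distr M (count_space UNIV) (y k) = measure_pmf (pmf_of_set {1..N})"
    and sol: "S_solution M y gi \<kappa> Tc hs hf E X"
    and bdd: "AE \<omega> in M. \<omega> \<in> \<Omega>h \<longrightarrow>
                 bounded ((\<lambda>(k, j). X \<omega> k j) ` E \<omega>) \<and> hs_complete (E \<omega>)"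
  shows "AE \<omega> in M. \<omega> \<in> \<Omega>h \<longrightarrow>
           two_ts_asym_sim (HB_C Tc) (HB_F1 \<kappa> Tc g) (HB_D Tc) HB_G (E \<omega>) (X \<omega>) hs hf"
proof -
  interpret prob_space M by (rule P)
  have gavg: "\<And>q. g q = (1 / real N) *\<^sub>R (\<Sum>m\<in>{1..N}. gi m q)"
    by (rule gavg_lemma[OF grad N avg gradi])
  have admf: "admissible hf" using steps unfolding two_ts_admissible_def by auto
  have p1: "0 < 1 + \<rho>" using rho(1) by linarith
  have NZ: "AE \<omega> in M. \<forall>m\<in>{1..N}. \<forall>T>0. \<forall>e>0. eventually (\<lambda>n. \<forall>k. n \<le> k \<longrightarrow>
            tts_tau hf k \<le> tts_tau hf n + T \<longrightarrow>
            \<bar>\<Sum>i\<in>{n..<k}. hf (Suc i) * ((if y (Suc i) \<omega> = m then 1 else 0) - 1 / real N)\<bar> < e) sequentially"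
    by (rule noise_all[OF P ymeas yindep yunif N admf p1 rho(2)])
  have YY1: "AE \<omega> in M. y (Suc i) \<omega> \<in> {1..N}" for i
  proof -
    have "AE x in distr M (count_space UNIV) (y (Suc i)). x \<in> {1..N}"
      unfolding yunif[of "Suc i", simplified] AE_measure_pmf_iff using N by (simp add: set_pmf_of_set)
    then show ?thesis by (rule AE_distrD[OF ymeas[of "Suc i", simplified]])
  qed
  have YY: "AE \<omega> in M. \<forall>i. y (Suc i) \<omega> \<in> {1..N}"
    using YY1 by (simp add: AE_all_countable)
  show ?thesis
    using AE_space NZ YY bdd
  proof eventually_elim
    case (elim \<omega>)
    show ?case
    proof
      assume "\<omega> \<in> \<Omega>h"
      then have bc: "bounded ((\<lambda>(k, j). X \<omega> k j) ` E \<omega>)" "hs_complete (E \<omega>)" using elim by auto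
      have S: "hybrid_seq_domain (E \<omega>)"
        "\<And>k j. (k, j) \<in> E \<omega> \<Longrightarrow> (Suc k, j) \<in> E \<omega> \<Longrightarrow>
           X \<omega> k j \<in> HB_C Tc \<and>
           fst (X \<omega> (Suc k) j) = fst (X \<omega> k j) + hs (Suc k) *\<^sub>R F_HB \<kappa> Tc (fst (X \<omega> k j)) (snd (X \<omega> k j)) \<and>
           snd (X \<omega> (Suc k) j) = snd (X \<omega> k j) +
              hf (Suc k) *\<^sub>R (gi (y (Suc k) \<omega>) (fst (fst (X \<omega> k j))) - snd (X \<omega> k j))"
        "\<And>k j. (k, j) \<in> E \<omega> \<Longrightarrow> (k, Suc j) \<in> E \<omega> \<Longrightarrow>
           X \<omega> k j \<in> HB_D Tc \<and>
           fst (X \<omega> k (Suc j)) = G_HB (fst (X \<omega> k j)) \<and>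
           snd (X \<omega> k (Suc j)) = snd (X \<omega> k j)"
        using sol elim(1) unfolding S_solution_def by blast+
      show "two_ts_asym_sim (HB_C Tc) (HB_F1 \<kappa> Tc g) (HB_D Tc) HB_G (E \<omega>) (X \<omega>) hs hf"
      proof (rule main_det[where yy="\<lambda>i. y i \<omega>", OF gavg gcont gconti N kT(2) steps S(1) bc(2) S(2) S(3) bc(1)])
        fix i show "y (Suc i) \<omega> \<in> {1..N}" using elim(3) by blast
      next
        fix m and T e :: real assume "m \<in> {1..N}" "T > 0" "e > 0"
        then show "eventually (\<lambda>n. \<forall>k. n \<le> k \<longrightarrow>
            tts_tau hf k \<le> tts_tau hf n + T \<longrightarrow>
            \<bar>\<Sum>i\<in>{n..<k}. hf (Suc i) * ((if y (Suc i) \<omega> = m then 1 else 0) - 1 / real N)\<bar> < e) sequentially"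
          using elim(2) by blast
      qed
    qed
  qed
qed



end
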